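(* Let $\alpha,\beta,m,n$ be integers. Then for all $\tau\in\mathbb{H}$ and $z$ with $\theta_1(z|\tau)\ne0$, $$\theta'[{}^{\alpha}_{\beta}]\Big(z+\frac n2+\frac m2\tau\Big|\tau\Big)=\frac{i^{-m(\beta+n)}e^{-\frac14\pi im(4z+m\tau)}}{\theta_1(z|\tau)}\Big\{\big(\theta_1'(z|\tau)-\pi im\,\theta_1(z|\tau)\big)\theta[{}^{\alpha+m}_{\beta+n}](z|\tau)-\big\langle(\alpha+m)\big[\tfrac{\beta+n}{2}\big]\big\rangle\,\pi\,\vartheta[{}^{\alpha+m}_{\beta+n}](\tau)^2\,\theta[{}^{\alpha+m-1}_{\ \ 0}](z|\tau)\,\theta[{}^{\ \ 0}_{\beta+n-1}](z|\tau)\Big\}.$$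
   Context: $\mathbb{H}=\{\Im\tau>0\}$. For integers $\alpha,\beta$: $\theta[{}^{\alpha}_{\beta}](z|\tau)=\sum_{k\in\mathbb{Z}}\exp\big(\pi i(k+\tfrac\alpha2)^2\tau+2\pi i(k+\tfrac\alpha2)(z+\tfrac\beta2)\big)$, $\theta'[{}^{\alpha}_{\beta}]=\partial_z\theta[{}^{\alpha}_{\beta}]$, $\vartheta[{}^{\alpha}_{\beta}](\tau)=\theta[{}^{\alpha}_{\beta}](0|\tau)$. $\theta_1:=-\theta[{}^1_1]$ and $\theta_1'=\partial_z\theta_1$. $[x]$ denotes the integer part of $x$ and $\langle x\rangle=(-1)^x$. *)

theory Defs
  imports "HOL-Complex_Analysis.Complex_Analysis"
begin

definition theta_char :: "int \<Rightarrow> int \<Rightarrow> complex \<Rightarrow> complex \<Rightarrow> complex" where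
  "theta_char a b z \<tau> =
     (\<Sum>\<^sub>\<infinity>k::int. exp (pi * \<i> * (of_int k + of_int a / 2)\<^sup>2 * \<tau>
                      + 2 * pi * \<i> * (of_int k + of_int a / 2) * (z + of_int b / 2)))"

definition theta_char' :: "int \<Rightarrow> int \<Rightarrow> complex \<Rightarrow> complex \<Rightarrow> complex" where
  "theta_char' a b z \<tau> = deriv (\<lambda>w. theta_char a b w \<tau>) z"

definition theta_null :: "int \<Rightarrow> int \<Rightarrow> complex \<Rightarrow> complex" where
  "theta_null a b \<tau> = theta_char a b 0 \<tau>"

definition theta1 :: "complex \<Rightarrow> complex \<Rightarrow> complex" where
  "theta1 z \<tau> = - theta_char 1 1 z \<tau>"

definition theta1' :: "complex \<Rightarrow> complex \<Rightarrow> complex" where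
  "theta1' z \<tau> = deriv (\<lambda>w. theta1 w \<tau>) z"

end

theory Submission
  imports Defs
begin


lemma exp_abs_int_summable: "(\<lambda>k::int. exp (- \<bar>real_of_int k\<bar>)) summable_on UNIV"
proof -
  have g: "summable (\<lambda>n::nat. exp (- real n))"
  proof -
    have "summable (\<lambda>n::nat. (exp (-1::real)) ^ n)" by (rule summable_geometric) simp
    moreover have "(exp (-1::real)) ^ n = exp (- real n)" for n :: nat
      by (simp add: exp_of_nat_mult[symmetric])
    ultimately show ?thesis by simp
  qed
  have s1: "(\<lambda>n::nat. exp (- real n)) summable_on UNIV"
    using g by (subst summable_on_UNIV_nonneg_real_iff) auto
  have A: "(\<lambda>k::int. exp (- \<bar>real_of_int k\<bar>)) summable_on (int ` UNIV)"
  proof (subst summable_on_reindex)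
    show "inj_on int UNIV" by simp
    show "((\<lambda>k::int. exp (- \<bar>real_of_int k\<bar>)) \<circ> int) summable_on UNIV"
      using s1 by (simp add: o_def)
  qed
  have g2: "summable (\<lambda>n::nat. exp (- real (n+1)))"
    using summable_ignore_initial_segment[OF g, of 1] by simp
  have s2: "(\<lambda>n::nat. exp (- real (n+1))) summable_on UNIV"
    using g2 by (subst summable_on_UNIV_nonneg_real_iff) auto
  have B: "(\<lambda>k::int. exp (- \<bar>real_of_int k\<bar>)) summable_on ((\<lambda>n. - int n - 1) ` UNIV)"
  proof (subst summable_on_reindex)
    show "inj_on (\<lambda>n::nat. - int n - 1) UNIV" by (simp add: inj_on_def)
    have "\<bar>real_of_int (- int n - 1)\<bar> = real (n+1)" for n by simp
    then show "((\<lambda>k::int. exp (- \<bar>real_of_int k\<bar>)) \<circ> (\<lambda>n::nat. - int n - 1)) summable_on UNIV"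
      using s2 by (simp add: o_def)
  qed
  have U: "(UNIV::int set) = int ` UNIV \<union> (\<lambda>n. - int n - 1) ` UNIV"
  proof -
    have "x \<in> int ` UNIV \<union> (\<lambda>n. - int n - 1) ` UNIV" for x :: int
    proof (cases "x \<ge> 0")
      case True then show ?thesis by (metis UnI1 nonneg_int_cases rangeI)
    next
      case False
      then have "x = - int (nat (- x - 1)) - 1" by simp
      then show ?thesis by blast
    qed
    then show ?thesis by blast
  qed
  have D: "int ` UNIV \<inter> (\<lambda>n. - int n - 1) ` UNIV = {}" by auto
  show ?thesis
    by (subst U, rule summable_on_Un_disjoint[OF A B D])
qed

lemma exp_abs_int_shift_summable: "(\<lambda>k::int. exp (- \<bar>real_of_int k + c\<bar>)) summable_on UNIV"
proof (rule summable_on_comparison_test[OF summable_on_cmult_right[OF exp_abs_int_summable, of "exp \<bar>c\<bar>"]])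
  fix k :: int
  show "0 \<le> exp (- \<bar>real_of_int k + c\<bar>)" by simp
  have "- \<bar>real_of_int k + c\<bar> \<le> \<bar>c\<bar> + - \<bar>real_of_int k\<bar>" by linarith
  then show "exp (- \<bar>real_of_int k + c\<bar>) \<le> exp \<bar>c\<bar> * exp (- \<bar>real_of_int k\<bar>)"
    by (simp add: exp_add[symmetric])
qed



lemma pow_fact_le_exp:
  fixes x :: real assumes "x \<ge> 0" shows "x ^ n \<le> fact n * exp x"
proof -
  have "x ^ n / fact n \<le> exp x"
  proof -
    have "(\<Sum>i\<in>{n}. x ^ i /\<^sub>R fact i) \<le> (\<Sum>i. x ^ i /\<^sub>R fact i)"
      by (rule sum_le_suminf) (use assms summable_exp_generic[of x] in auto)
    then show ?thesis by (simp add: exp_def divide_inverse ac_simps)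
  qed
  then show ?thesis by (simp add: field_simps)
qed

lemma quad_bound:
  fixes y s bb :: real assumes "s > 0"
  shows "- s * y^2 + bb * y \<le> bb^2 / (4 * s)"
proof -
  have "0 \<le> s * (y - bb/(2 * s))^2" using assms by simp
  also have "s * (y - bb/(2 * s))^2 = s * y^2 - bb * y + bb^2/(4 * s)"
    using assms by (simp add: power2_eq_square field_simps)
  finally show ?thesis by linarith
qed

lemma norm_exp_term:
  fixes x :: real and t w :: complex
  shows "norm (exp (of_real pi * \<i> * (complex_of_real x)^2 * t + 2 * of_real pi * \<i> * complex_of_real x * w)) = exp (- pi * x^2 * Im t - 2 * pi * x * Im w)"
  by (simp add: norm_exp_eq_Re power2_eq_square)

lemma ex_bound:
  assumes "s > 0" "R \<ge> 0"
  shows "\<exists>C. \<forall>x::real. \<forall>t w::complex. Im t \<ge> s \<longrightarrow> \<bar>Im w\<bar> \<le> R \<longrightarrow>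
     norm ((2 * of_real pi * \<i> * complex_of_real x)^j * exp (of_real pi * \<i> * (complex_of_real x)^2 * t + 2 * of_real pi * \<i> * complex_of_real x * w)) \<le> C * exp (- \<bar>x\<bar>)"
proof (intro exI allI impI)
  fix x :: real and t w :: complex
  assume t: "Im t \<ge> s" and w: "\<bar>Im w\<bar> \<le> R"
  define K where "K = (2 * pi * R+2)^2/(4 * (pi * s))"
  have n1: "norm ((2 * of_real pi * \<i> * complex_of_real x)^j) = (2 * pi)^j * \<bar>x\<bar>^j"
    by (simp add: norm_power norm_mult power_mult_distrib)
  have "\<bar>x\<bar>^j \<le> fact j * exp \<bar>x\<bar>" by (rule pow_fact_le_exp) simp
  then have n1': "norm ((2 * of_real pi * \<i> * complex_of_real x)^j) \<le> (2 * pi)^j * fact j * exp \<bar>x\<bar>"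
    unfolding n1 by (simp add: mult.assoc)
  have "- pi * x^2 * Im t \<le> - pi * x^2 * s"
    using t by (simp add: mult_left_mono)
  moreover have "- 2 * pi * x * Im w \<le> 2 * pi * R * \<bar>x\<bar>"
  proof -
    have "\<bar>x * Im w\<bar> \<le> \<bar>x\<bar> * R" using w by (simp add: abs_mult mult_left_mono)
    then have "- (x * Im w) \<le> R * \<bar>x\<bar>" by (simp add: mult.commute)
    then have "2 * pi * (- (x * Im w)) \<le> 2 * pi * (R * \<bar>x\<bar>)" by (intro mult_left_mono) auto
    then show ?thesis by (simp add: algebra_simps)
  qed
  moreover have "- (pi * s) * \<bar>x\<bar>^2 + (2 * pi * R+2) * \<bar>x\<bar> = - pi * x^2 * s + 2 * pi * R * \<bar>x\<bar> + \<bar>x\<bar> + \<bar>x\<bar>"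
    by (simp add: power2_abs algebra_simps)
  ultimately have "- pi * x^2 * Im t - 2 * pi * x * Im w + \<bar>x\<bar> + \<bar>x\<bar> \<le> - (pi * s) * \<bar>x\<bar>^2 + (2 * pi * R+2) * \<bar>x\<bar>"
    by linarith
  also have "\<dots> \<le> K" unfolding K_def by (rule quad_bound) (use assms in simp)
  finally have e: "exp (- pi * x^2 * Im t - 2 * pi * x * Im w) \<le> exp K * exp (- \<bar>x\<bar>) * exp (- \<bar>x\<bar>)"
    by (simp add: exp_add[symmetric])
  have "norm ((2 * of_real pi * \<i> * complex_of_real x)^j * exp (of_real pi * \<i> * (complex_of_real x)^2 * t + 2 * of_real pi * \<i> * complex_of_real x * w))
      = norm ((2 * of_real pi * \<i> * complex_of_real x)^j) * exp (- pi * x^2 * Im t - 2 * pi * x * Im w)"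
    by (simp only: norm_mult norm_exp_term)
  also have "\<dots> \<le> ((2 * pi)^j * fact j * exp \<bar>x\<bar>) * (exp K * exp (- \<bar>x\<bar>) * exp (- \<bar>x\<bar>))"
    by (intro mult_mono n1' e) auto
  also have "\<dots> = ((2 * pi)^j * fact j * exp K) * exp (- \<bar>x\<bar>)"
    by (simp add: exp_minus field_simps)
  finally show "norm ((2 * of_real pi * \<i> * complex_of_real x)^j * exp (of_real pi * \<i> * (complex_of_real x)^2 * t + 2 * of_real pi * \<i> * complex_of_real x * w)) \<le> ((2 * pi)^j * fact j * exp K) * exp (- \<bar>x\<bar>)" .
qed



lemma infsum_deriv:
  fixes f f' :: "int \<Rightarrow> complex \<Rightarrow> complex"
  assumes S: "open S" and d: "\<And>k w. w \<in> S \<Longrightarrow> (f k has_field_derivative f' k w) (at w)"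
    and b: "\<And>w. w \<in> S \<Longrightarrow> \<exists>r>0. cball w r \<subseteq> S \<and> (\<exists>M. M summable_on UNIV \<and> (\<forall>k. \<forall>v\<in>cball w r. norm (f k v) \<le> M k))"
    and w: "w \<in> S"
  shows "((\<lambda>v. \<Sum>\<^sub>\<infinity>k. f k v) has_field_derivative (\<Sum>\<^sub>\<infinity>k. f' k w)) (at w)"
proof -
  obtain r M where r: "r > 0" "cball w r \<subseteq> S" and M: "M summable_on UNIV"
    and Mb: "\<And>k v. v \<in> cball w r \<Longrightarrow> norm (f k v) \<le> M k"
    using b[OF w] by blast
  have ul: "uniform_limit (cball w r) (\<lambda>X y. \<Sum>x\<in>X. f x y) (\<lambda>y. \<Sum>\<^sub>\<infinity>x. f x y) (finite_subsets_at_top UNIV)"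
    by (rule Weierstrass_m_test_general[OF _ M]) (use Mb in auto)
  have cont: "\<forall>\<^sub>F X in finite_subsets_at_top UNIV. continuous_on (cball w r) (\<lambda>y. \<Sum>x\<in>X. f x y) \<and>
        (\<forall>v\<in>ball w r. ((\<lambda>y. \<Sum>x\<in>X. f x y) has_field_derivative (\<Sum>x\<in>X. f' x v)) (at v))"
  proof (intro always_eventually allI conjI ballI)
    fix X :: "int set"
    have "continuous_on (cball w r) (f x)" for x
      using d r(2) by (meson DERIV_continuous continuous_at_imp_continuous_on subsetD)
    then show "continuous_on (cball w r) (\<lambda>y. \<Sum>x\<in>X. f x y)"
      by (intro continuous_on_sum) auto
    fix v assume "v \<in> ball w r"
    then have "v \<in> S" using r(2) by auto
    then show "((\<lambda>y. \<Sum>x\<in>X. f x y) has_field_derivative (\<Sum>x\<in>X. f' x v)) (at v)"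
      by (intro DERIV_sum d)
  qed
  obtain g' where g': "\<And>v. v \<in> ball w r \<Longrightarrow> ((\<lambda>y. \<Sum>\<^sub>\<infinity>x. f x y) has_field_derivative g' v) (at v) \<and>
      ((\<lambda>X. \<Sum>x\<in>X. f' x v) \<longlongrightarrow> g' v) (finite_subsets_at_top UNIV)"
    by (rule has_complex_derivative_uniform_limit[OF cont ul _ r(1)]) auto
  have wb: "w \<in> ball w r" using r by simp
  have "((\<lambda>k. f' k w) has_sum g' w) UNIV"
    using g'[OF wb] unfolding has_sum_def by simp
  then have "(\<Sum>\<^sub>\<infinity>k. f' k w) = g' w" by (rule infsumI)
  then show ?thesis using g'[OF wb] by simp
qed



definition ex :: "real \<Rightarrow> complex \<Rightarrow> complex \<Rightarrow> int \<Rightarrow> complex" where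
  "ex c t w k = exp (of_real pi * \<i> * (complex_of_real (of_int k + c))^2 * t + 2 * of_real pi * \<i> * complex_of_real (of_int k + c) * w)"

definition wt :: "nat \<Rightarrow> real \<Rightarrow> int \<Rightarrow> complex" where
  "wt j c k = (2 * of_real pi * \<i> * complex_of_real (of_int k + c))^j"

definition Thj :: "nat \<Rightarrow> real \<Rightarrow> complex \<Rightarrow> complex \<Rightarrow> complex" where
  "Thj j c t w = (\<Sum>\<^sub>\<infinity>k. wt j c k * ex c t w k)"

lemma term_bound:
  assumes "s > 0" "R \<ge> 0"
  shows "\<exists>C. \<forall>k t w. Im t \<ge> s \<longrightarrow> \<bar>Im w\<bar> \<le> R \<longrightarrow> norm (wt j c k * ex c t w k) \<le> C * exp (- \<bar>of_int k + c\<bar>)"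
proof -
  obtain C where C: "\<And>x t w. Im t \<ge> s \<Longrightarrow> \<bar>Im w\<bar> \<le> R \<Longrightarrow>
     norm ((2 * of_real pi * \<i> * complex_of_real x)^j * exp (of_real pi * \<i> * (complex_of_real x)^2 * t + 2 * of_real pi * \<i> * complex_of_real x * w)) \<le> C * exp (- \<bar>x\<bar>)"
    using ex_bound[OF assms, of j] by blast
  show ?thesis
  proof (rule exI[of _ C], intro allI impI)
    fix k t w assume "Im t \<ge> s" "\<bar>Im w\<bar> \<le> R"
    from C[OF this, of "of_int k + c"] show "norm (wt j c k * ex c t w k) \<le> C * exp (- \<bar>of_int k + c\<bar>)"
      by (simp add: wt_def ex_def)
  qed
qed

lemma term_summable:
  assumes "Im t > 0"
  shows "(\<lambda>k. wt j c k * ex c t w k) summable_on UNIV"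
proof -
  obtain C where C: "\<And>k. norm (wt j c k * ex c t w k) \<le> C * exp (- \<bar>of_int k + c\<bar>)"
    using term_bound[OF assms, of "\<bar>Im w\<bar>" j c] by auto
  have "(\<lambda>k. norm (wt j c k * ex c t w k)) summable_on UNIV"
    by (rule summable_on_comparison_test[OF summable_on_cmult_right[OF exp_abs_int_shift_summable]]) (use C in auto)
  then show ?thesis by (simp add: summable_on_iff_abs_summable_on_complex)
qed

lemma Im_cball: "v \<in> cball w r \<Longrightarrow> \<bar>Im v - Im w\<bar> \<le> r"
  by (metis abs_Im_le_cmod dist_commute dist_complex_def mem_cball minus_complex.simps(2) order_trans)

lemma wt_Suc: "wt (Suc j) c k = wt j c k * (2 * of_real pi * \<i> * complex_of_real (of_int k + c))"
  by (simp add: wt_def)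

lemma wt_SS: "wt (j+2) c k / (4 * of_real pi * \<i>) = wt j c k * (of_real pi * \<i> * (complex_of_real (of_int k + c))^2)"
  by (simp add: wt_def power_add power2_eq_square field_simps)

lemma Thj_deriv_w:
  assumes "Im t > 0"
  shows "((\<lambda>w. Thj j c t w) has_field_derivative Thj (Suc j) c t w) (at w)"
  unfolding Thj_def
proof (rule infsum_deriv[where S=UNIV])
  fix k v
  show "((\<lambda>w. wt j c k * ex c t w k) has_field_derivative wt (Suc j) c k * ex c t v k) (at v)"
    unfolding ex_def wt_Suc by (auto intro!: derivative_eq_intros simp: algebra_simps)
next
  fix v :: complex
  obtain C where C: "\<And>k t' w. Im t' \<ge> Im t \<Longrightarrow> \<bar>Im w\<bar> \<le> \<bar>Im v\<bar> + 1 \<Longrightarrow> norm (wt j c k * ex c t' w k) \<le> C * exp (- \<bar>of_int k + c\<bar>)"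
    using term_bound[OF assms, of "\<bar>Im v\<bar> + 1" j c] by fastforce
  show "\<exists>r>0. cball v r \<subseteq> UNIV \<and> (\<exists>M. M summable_on UNIV \<and> (\<forall>k. \<forall>u\<in>cball v r. norm (wt j c k * ex c t u k) \<le> M k))"
  proof (intro exI conjI allI ballI)
    show "(\<lambda>k. C * exp (- \<bar>of_int k + c\<bar>)) summable_on UNIV"
      by (rule summable_on_cmult_right[OF exp_abs_int_shift_summable])
    fix k u assume "u \<in> cball v 1"
    then have "\<bar>Im u\<bar> \<le> \<bar>Im v\<bar> + 1" using Im_cball[of u v 1] by linarith
    then show "norm (wt j c k * ex c t u k) \<le> C * exp (- \<bar>of_int k + c\<bar>)" by (rule C[OF order_refl])
  qed auto
qed auto

lemma Thj_deriv_t: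
  assumes "Im t > 0"
  shows "((\<lambda>t. Thj j c t w) has_field_derivative Thj (j+2) c t w / (4 * of_real pi * \<i>)) (at t)"
proof -
  have "((\<lambda>t. Thj j c t w) has_field_derivative (\<Sum>\<^sub>\<infinity>k. wt (j+2) c k * ex c t w k / (4 * of_real pi * \<i>))) (at t)"
  unfolding Thj_def
  proof (rule infsum_deriv[where S="{t. Im t > 0}"])
    show "open {t. Im t > 0}" by (simp add: open_halfspace_Im_gt)
    fix k v
    show "((\<lambda>t. wt j c k * ex c t w k) has_field_derivative wt (j+2) c k * ex c v w k / (4 * of_real pi * \<i>)) (at v)"
      unfolding ex_def times_divide_eq_left[symmetric] mult.commute[of _ "_ / _"]
      unfolding mult.commute[of "wt (j+2) c k / _"] wt_SS
      by (auto intro!: derivative_eq_intros simp: algebra_simps)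
  next
    fix v :: complex assume v: "v \<in> {t. Im t > 0}"
    then have s: "Im v / 2 > 0" by simp
    obtain C where C: "\<And>k t u. Im t \<ge> Im v / 2 \<Longrightarrow> \<bar>Im u\<bar> \<le> \<bar>Im w\<bar> \<Longrightarrow> norm (wt j c k * ex c t u k) \<le> C * exp (- \<bar>of_int k + c\<bar>)"
      using term_bound[OF s, of "\<bar>Im w\<bar>" j c] by auto
    show "\<exists>r>0. cball v r \<subseteq> {t. Im t > 0} \<and> (\<exists>M. M summable_on UNIV \<and> (\<forall>k. \<forall>u\<in>cball v r. norm (wt j c k * ex c u w k) \<le> M k))"
    proof (intro exI conjI allI ballI)
      show "Im v / 2 > 0" by (rule s)
      show "cball v (Im v / 2) \<subseteq> {t. Im t > 0}"
      proof
        fix u assume "u \<in> cball v (Im v / 2)"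
        then have "\<bar>Im u - Im v\<bar> \<le> Im v / 2" by (rule Im_cball)
        then have "Im u \<ge> Im v / 2" by linarith
        then show "u \<in> {t. Im t > 0}" using s by simp
      qed
      show "(\<lambda>k. C * exp (- \<bar>of_int k + c\<bar>)) summable_on UNIV"
        by (rule summable_on_cmult_right[OF exp_abs_int_shift_summable])
      fix k u assume "u \<in> cball v (Im v / 2)"
      then have "\<bar>Im u - Im v\<bar> \<le> Im v / 2" by (rule Im_cball)
      then have "Im u \<ge> Im v / 2" by linarith
      then show "norm (wt j c k * ex c u w k) \<le> C * exp (- \<bar>of_int k + c\<bar>)" by (rule C) simp
    qed
  qed (use assms in auto)
  also have "(\<Sum>\<^sub>\<infinity>k. wt (j+2) c k * ex c t w k / (4 * of_real pi * \<i>)) = Thj (j+2) c t w / (4 * of_real pi * \<i>)"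
    unfolding Thj_def divide_inverse by (rule infsum_cmult_left')
  finally show ?thesis .
qed



lemma exp_2pi_int: "exp (2 * of_real pi * \<i> * of_int n) = 1"
  using exp_plus_2pin[of 0 n] by (simp add: mult_ac)

lemma ex_cshift: "ex (c + of_int n) t w k = ex c t w (k + n)"
  unfolding ex_def by (simp add: add_ac)

lemma wt_cshift: "wt j (c + of_int n) k = wt j c (k + n)"
  unfolding wt_def by (simp add: add_ac)

lemma Thj_cshift: "Thj j (c + of_int n) t w = Thj j c t w"
  unfolding Thj_def wt_cshift ex_cshift
  by (rule infsum_reindex_bij_witness[of UNIV "\<lambda>k. k - n" "\<lambda>k. k + n"]) auto

lemma ex_wshift: "ex c t (w + of_int n) k = exp (2 * of_real pi * \<i> * of_real c * of_int n) * ex c t w k"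
proof -
  have "ex c t (w + of_int n) k = exp ((of_real pi * \<i> * (complex_of_real (of_int k + c))^2 * t + 2 * of_real pi * \<i> * complex_of_real (of_int k + c) * w
     + 2 * of_real pi * \<i> * of_real c * of_int n) + 2 * of_real pi * \<i> * of_int (k * n))"
    unfolding ex_def by (rule arg_cong[where f=exp]) (simp add: algebra_simps)
  also have "\<dots> = exp (2 * of_real pi * \<i> * of_real c * of_int n) * ex c t w k"
    unfolding exp_add exp_2pi_int ex_def by simp
  finally show ?thesis .
qed

lemma Thj_wshift: "Thj j c t (w + of_int n) = exp (2 * of_real pi * \<i> * of_real c * of_int n) * Thj j c t w"
  unfolding Thj_def ex_wshift
  by (subst infsum_cmult_right'[symmetric]) (simp add: mult_ac)

lemma ex_neg: "ex c t (- w) (- k) = ex (- c) t w k"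
  unfolding ex_def by (rule arg_cong[where f=exp]) (simp add: algebra_simps power2_eq_square)

lemma wt_neg: "wt j c (- k) = (-1)^j * wt j (- c) k"
  unfolding wt_def by (simp add: power_mult_distrib[symmetric] algebra_simps)

lemma Thj_neg: "Thj j c t (- w) = (-1)^j * Thj j (- c) t w"
proof -
  have "Thj j c t (- w) = (\<Sum>\<^sub>\<infinity>k. wt j c (- k) * ex c t (- w) (- k))"
    unfolding Thj_def
    by (rule infsum_reindex_bij_witness[of UNIV uminus uminus]) auto
  also have "\<dots> = (\<Sum>\<^sub>\<infinity>k. (-1)^j * (wt j (- c) k * ex (- c) t w k))"
    unfolding wt_neg ex_neg by (simp add: mult_ac)
  also have "\<dots> = (-1)^j * Thj j (- c) t w"
    unfolding Thj_def by (rule infsum_cmult_right')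
  finally show ?thesis .
qed



lemma ex_summable: "Im t > 0 \<Longrightarrow> (\<lambda>k. ex c t w k) summable_on UNIV"
  using term_summable[of t 0 c w] by (simp add: wt_def)

lemma Thj0: "Thj 0 c t w = (\<Sum>\<^sub>\<infinity>k. ex c t w k)"
  by (simp add: Thj_def wt_def)

lemma prod_infsum:
  fixes f g :: "int \<Rightarrow> complex"
  assumes f: "f summable_on UNIV" and g: "g summable_on UNIV"
  shows "(\<lambda>(j,k). f j * g k) summable_on UNIV"
    and "(\<Sum>\<^sub>\<infinity>j. f j) * (\<Sum>\<^sub>\<infinity>k. g k) = (\<Sum>\<^sub>\<infinity>(j,k). f j * g k)"
proof -
  have fa: "(\<lambda>j. norm (f j)) summable_on UNIV" using f by (simp add: summable_on_iff_abs_summable_on_complex)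
  have ga: "(\<lambda>j. norm (g j)) summable_on UNIV" using g by (simp add: summable_on_iff_abs_summable_on_complex)
  have h1: "\<forall>j\<in>UNIV. (\<lambda>k. norm (f j * g k)) summable_on UNIV"
    using summable_on_cmult_right[OF ga] by (simp add: norm_mult)
  have h2: "(\<lambda>j. norm (\<Sum>\<^sub>\<infinity>k. norm (f j * g k))) summable_on UNIV"
  proof -
    have "(\<lambda>j. norm (f j) * (\<Sum>\<^sub>\<infinity>k. norm (g k))) summable_on UNIV"
      by (rule summable_on_cmult_left[OF fa])
    moreover have "norm (\<Sum>\<^sub>\<infinity>k. norm (f x * g k)) = norm (f x) * (\<Sum>\<^sub>\<infinity>k. norm (g k))" for x
    proof -
      have "(\<Sum>\<^sub>\<infinity>k. norm (f x * g k)) = norm (f x) * (\<Sum>\<^sub>\<infinity>k. norm (g k))"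
        by (simp add: norm_mult infsum_cmult_right')
      moreover have "(\<Sum>\<^sub>\<infinity>k. norm (g k)) \<ge> 0" by (rule infsum_nonneg) simp
      ultimately show ?thesis by simp
    qed
    ultimately show ?thesis by simp
  qed
  have "(\<lambda>p. norm ((\<lambda>(j,k). f j * g k) p)) summable_on Sigma UNIV (\<lambda>_. UNIV)"
    by (rule iffD2[OF Infinite_Sum.abs_summable_on_Sigma_iff]) (use h1 h2 in auto)
  then show S: "(\<lambda>(j,k). f j * g k) summable_on UNIV"
    by (simp add: summable_on_iff_abs_summable_on_complex)
  have "(\<Sum>\<^sub>\<infinity>(j,k). f j * g k) = (\<Sum>\<^sub>\<infinity>j. \<Sum>\<^sub>\<infinity>k. f j * g k)"
    using infsum_Sigma_banach[of "\<lambda>(j,k). f j * g k" UNIV "\<lambda>_. UNIV"] S by simp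
  also have "\<dots> = (\<Sum>\<^sub>\<infinity>j. f j * (\<Sum>\<^sub>\<infinity>k. g k))"
    by (simp add: infsum_cmult_right')
  also have "\<dots> = (\<Sum>\<^sub>\<infinity>j. f j) * (\<Sum>\<^sub>\<infinity>k. g k)"
    by (simp add: infsum_cmult_left')
  finally show "(\<Sum>\<^sub>\<infinity>j. f j) * (\<Sum>\<^sub>\<infinity>k. g k) = (\<Sum>\<^sub>\<infinity>(j,k). f j * g k)" by simp
qed

lemma ex_pair_aux:
  fixes p r e c1 c2 x y t :: complex
  shows "pi * \<i> * (p + r + e + c1)^2 * t + 2 * pi * \<i> * (p + r + e + c1) * x +
    (pi * \<i> * (p - r + c2)^2 * t + 2 * pi * \<i> * (p - r + c2) * y) =
    pi * \<i> * (p + (e + c1 + c2) / 2)^2 * (2 * t) + 2 * pi * \<i> * (p + (e + c1 + c2) / 2) * (x + y) +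
    (pi * \<i> * (r + (e + c1 - c2) / 2)^2 * (2 * t) + 2 * pi * \<i> * (r + (e + c1 - c2) / 2) * (x - y))"
  by (simp add: field_simps power2_eq_square)

lemma ex_pair:
  "ex c1 t x (P + R + e) * ex c2 t y (P - R) =
   ex ((of_int e + c1 + c2) / 2) (2 * t) (x + y) P * ex ((of_int e + c1 - c2) / 2) (2 * t) (x - y) R"
  unfolding ex_def exp_add[symmetric]
  using ex_pair_aux[of "of_int P" "of_int R" "of_int e" "of_real c1" t x "of_real c2" y]
  by (intro arg_cong[where f=exp]) simp



lemma Th_add:
  assumes t: "Im t > 0"
  shows "Thj 0 c1 t x * Thj 0 c2 t y =
    Thj 0 ((c1 + c2) / 2) (2 * t) (x + y) * Thj 0 ((c1 - c2) / 2) (2 * t) (x - y) +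
    Thj 0 ((1 + c1 + c2) / 2) (2 * t) (x + y) * Thj 0 ((1 + c1 - c2) / 2) (2 * t) (x - y)"
proof -
  have t2: "Im (2 * t) > 0" using t by simp
  define F where "F = (\<lambda>(j,k). ex c1 t x j * ex c2 t y k)"
  have FS: "F summable_on UNIV" unfolding F_def by (rule prod_infsum(1)[OF ex_summable[OF t] ex_summable[OF t]])
  have L: "Thj 0 c1 t x * Thj 0 c2 t y = infsum F UNIV"
    unfolding Thj0 F_def by (rule prod_infsum(2)[OF ex_summable[OF t] ex_summable[OF t]])
  define Ev where "Ev = {(j::int,k::int). even (j + k)}"
  define Od where "Od = {(j::int,k::int). odd (j + k)}"
  have U: "UNIV = Ev \<union> Od" "Ev \<inter> Od = {}" unfolding Ev_def Od_def by auto
  have "infsum F UNIV = infsum F Ev + infsum F Od"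
    unfolding U(1) by (rule infsum_Un_disjoint) (use FS summable_on_subset_banach U in auto)
  moreover have "infsum F Ev = Thj 0 ((c1 + c2) / 2) (2 * t) (x + y) * Thj 0 ((c1 - c2) / 2) (2 * t) (x - y)"
  proof -
    have "infsum F Ev = (\<Sum>\<^sub>\<infinity>(P,R). F (P + R + 0, P - R))"
    proof (rule infsum_reindex_bij_witness[of Ev "\<lambda>(P,R). (P + R + 0, P - R)" "\<lambda>(j,k). ((j + k) div 2, (j - k) div 2)"])
      fix a assume "a \<in> Ev"
      then obtain j k where a: "a = (j,k)" "even (j + k)" unfolding Ev_def by auto
      then show "(\<lambda>(P,R). (P + R + 0, P - R)) ((\<lambda>(j,k). ((j + k) div 2, (j - k) div 2)) a) = a"
        by (auto elim!: evenE; presburger)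
      then show "(\<lambda>(P,R). F (P + R + 0, P - R)) ((\<lambda>(j,k). ((j + k) div 2, (j - k) div 2)) a) = F a"
        by (simp add: case_prod_beta)
    next
      fix b :: "int \<times> int"
      obtain P R where b: "b = (P,R)" by fastforce
      then show "(\<lambda>(j,k). ((j + k) div 2, (j - k) div 2)) ((\<lambda>(P,R). (P + R + 0, P - R)) b) = b"
        by (simp; presburger)
      show "(\<lambda>(P,R). (P + R + 0, P - R)) b \<in> Ev" unfolding Ev_def b by simp
    qed auto
    also have "\<dots> = (\<Sum>\<^sub>\<infinity>(P,R). ex ((of_int 0 + c1 + c2) / 2) (2 * t) (x + y) P * ex ((of_int 0 + c1 - c2) / 2) (2 * t) (x - y) R)"
      unfolding F_def by (simp only: case_prod_beta fst_conv snd_conv ex_pair)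
    also have "\<dots> = (\<Sum>\<^sub>\<infinity>(P,R). ex ((c1 + c2) / 2) (2 * t) (x + y) P * ex ((c1 - c2) / 2) (2 * t) (x - y) R)"
      by simp
    also have "\<dots> = Thj 0 ((c1 + c2) / 2) (2 * t) (x + y) * Thj 0 ((c1 - c2) / 2) (2 * t) (x - y)"
      unfolding Thj0 by (rule prod_infsum(2)[OF ex_summable[OF t2] ex_summable[OF t2], symmetric])
    finally show ?thesis .
  qed
  moreover have "infsum F Od = Thj 0 ((1 + c1 + c2) / 2) (2 * t) (x + y) * Thj 0 ((1 + c1 - c2) / 2) (2 * t) (x - y)"
  proof -
    have "infsum F Od = (\<Sum>\<^sub>\<infinity>(P,R). F (P + R + 1, P - R))"
    proof (rule infsum_reindex_bij_witness[of Od "\<lambda>(P,R). (P + R + 1, P - R)" "\<lambda>(j,k). ((j + k - 1) div 2, (j - k - 1) div 2)"])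
      fix a assume "a \<in> Od"
      then obtain j k where a: "a = (j,k)" "odd (j + k)" unfolding Od_def by auto
      then show "(\<lambda>(P,R). (P + R + 1, P - R)) ((\<lambda>(j,k). ((j + k - 1) div 2, (j - k - 1) div 2)) a) = a"
        by (auto elim!: oddE; presburger)
      then show "(\<lambda>(P,R). F (P + R + 1, P - R)) ((\<lambda>(j,k). ((j + k - 1) div 2, (j - k - 1) div 2)) a) = F a"
        by (simp add: case_prod_beta)
    next
      fix b :: "int \<times> int"
      obtain P R where b: "b = (P,R)" by fastforce
      then show "(\<lambda>(j,k). ((j + k - 1) div 2, (j - k - 1) div 2)) ((\<lambda>(P,R). (P + R + 1, P - R)) b) = b"
        by (simp; presburger)
      show "(\<lambda>(P,R). (P + R + 1, P - R)) b \<in> Od" unfolding Od_def b by simp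
    qed auto
    also have "\<dots> = (\<Sum>\<^sub>\<infinity>(P,R). ex ((of_int 1 + c1 + c2) / 2) (2 * t) (x + y) P * ex ((of_int 1 + c1 - c2) / 2) (2 * t) (x - y) R)"
      unfolding F_def by (simp only: case_prod_beta fst_conv snd_conv ex_pair)
    also have "\<dots> = (\<Sum>\<^sub>\<infinity>(P,R). ex ((1 + c1 + c2) / 2) (2 * t) (x + y) P * ex ((1 + c1 - c2) / 2) (2 * t) (x - y) R)"
      by simp
    also have "\<dots> = Thj 0 ((1 + c1 + c2) / 2) (2 * t) (x + y) * Thj 0 ((1 + c1 - c2) / 2) (2 * t) (x - y)"
      unfolding Thj0 by (rule prod_infsum(2)[OF ex_summable[OF t2] ex_summable[OF t2], symmetric])
    finally show ?thesis .
  qed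
  ultimately show ?thesis using L by simp
qed



lemma eq1: "exp (\<i> * of_real (pi / 2)) = \<i>"
  using cis_pi_half by (simp add: cis_conv_exp)

lemma e_q_p1: "exp (2 * of_real pi * \<i> * of_real (1/4) * of_int 1) = \<i>"
proof -
  have "2 * of_real pi * \<i> * of_real (1/4) * of_int 1 = \<i> * of_real (pi / 2)" by simp
  then show ?thesis using eq1 by simp
qed

lemma e_q_m1: "exp (2 * of_real pi * \<i> * of_real (1/4) * of_int (-1)) = - \<i>"
proof -
  have "2 * of_real pi * \<i> * of_real (1/4) * of_int (-1) = - (\<i> * of_real (pi / 2))" by simp
  then show ?thesis using eq1 by (simp add: exp_minus)
qed

lemma e_3q_p1: "exp (2 * of_real pi * \<i> * of_real (3/4) * of_int 1) = - \<i>"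
proof -
  have h: "2 * of_real pi * \<i> * of_real (3/4) * of_int 1 = of_real pi * \<i> + \<i> * of_real (pi / 2)" by (simp add: field_simps)
  show ?thesis by (subst h) (simp only: exp_add eq1 exp_pi_i, simp)
qed

lemma e_3q_m1: "exp (2 * of_real pi * \<i> * of_real (3/4) * of_int (-1)) = \<i>"
proof -
  have h: "2 * of_real pi * \<i> * of_real (3/4) * of_int (-1) = - (of_real pi * \<i> + \<i> * of_real (pi / 2))" by (simp add: field_simps)
  show ?thesis by (subst h) (simp only: exp_minus exp_add eq1 exp_pi_i, simp)
qed

lemma e_h_m1: "exp (2 * of_real pi * \<i> * of_real (1/2) * of_int (-1)) = - 1"
proof -
  have "2 * of_real pi * \<i> * of_real (1/2) * of_int (-1) = - (of_real pi * \<i>)" by simp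
  then show ?thesis by (simp add: exp_minus)
qed

lemma e_0: "exp (2 * of_real pi * \<i> * of_real 0 * of_int n) = 1" by simp

definition th1 :: "complex \<Rightarrow> complex \<Rightarrow> complex" where "th1 t z = - Thj 0 (1/2) t (z + 1/2)"
definition th2 :: "complex \<Rightarrow> complex \<Rightarrow> complex" where "th2 t z = Thj 0 (1/2) t z"
definition th3 :: "complex \<Rightarrow> complex \<Rightarrow> complex" where "th3 t z = Thj 0 0 t z"
definition th4 :: "complex \<Rightarrow> complex \<Rightarrow> complex" where "th4 t z = Thj 0 0 t (z + 1/2)"

lemma P0h: "Im t > 0 \<Longrightarrow> Thj 0 0 t X * Thj 0 (1/2) t Y =
   Thj 0 (1/4) (2 * t) (X + Y) * Thj 0 (3/4) (2 * t) (X - Y) + Thj 0 (3/4) (2 * t) (X + Y) * Thj 0 (1/4) (2 * t) (X - Y)"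
proof -
  assume t: "Im t > 0"
  have "Thj 0 (3/4) (2 * t) w = Thj 0 (- 1/4) (2 * t) w" for w
    using Thj_cshift[of 0 "-1/4" 1 "2 * t" w] by simp
  then show ?thesis using Th_add[OF t, of 0 X "1/2" Y] by (simp add: field_simps)
qed

lemma Ph0: "Im t > 0 \<Longrightarrow> Thj 0 (1/2) t X * Thj 0 0 t Y =
   Thj 0 (1/4) (2 * t) (X + Y) * Thj 0 (1/4) (2 * t) (X - Y) + Thj 0 (3/4) (2 * t) (X + Y) * Thj 0 (3/4) (2 * t) (X - Y)"
  using Th_add[of t "1/2" X 0 Y] by (simp add: field_simps)

lemma Phh: "Im t > 0 \<Longrightarrow> Thj 0 (1/2) t X * Thj 0 (1/2) t Y =
   Thj 0 (1/2) (2 * t) (X + Y) * Thj 0 0 (2 * t) (X - Y) + Thj 0 0 (2 * t) (X + Y) * Thj 0 (1/2) (2 * t) (X - Y)"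
proof -
  assume t: "Im t > 0"
  have "Thj 0 1 (2 * t) w = Thj 0 0 (2 * t) w" for w
    using Thj_cshift[of 0 0 1 "2 * t" w] by simp
  then show ?thesis using Th_add[OF t, of "1/2" X "1/2" Y] by (simp add: field_simps)
qed

lemma P00: "Im t > 0 \<Longrightarrow> Thj 0 0 t X * Thj 0 0 t Y =
   Thj 0 0 (2 * t) (X + Y) * Thj 0 0 (2 * t) (X - Y) + Thj 0 (1/2) (2 * t) (X + Y) * Thj 0 (1/2) (2 * t) (X - Y)"
  using Th_add[of t 0 X 0 Y] by (simp add: field_simps)



lemma sh_q_m1: "Thj 0 (1/4) t (w + of_int (-1)) = - \<i> * Thj 0 (1/4) t w"
  using Thj_wshift[of 0 "1/4" t w "-1"] unfolding e_q_m1 .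
lemma sh_3q_m1: "Thj 0 (3/4) t (w + of_int (-1)) = \<i> * Thj 0 (3/4) t w"
  using Thj_wshift[of 0 "3/4" t w "-1"] unfolding e_3q_m1 .
lemma sh_q_p1: "Thj 0 (1/4) t (w + of_int 1) = \<i> * Thj 0 (1/4) t w"
  using Thj_wshift[of 0 "1/4" t w 1] unfolding e_q_p1 .
lemma sh_3q_p1: "Thj 0 (3/4) t (w + of_int 1) = - \<i> * Thj 0 (3/4) t w"
  using Thj_wshift[of 0 "3/4" t w 1] unfolding e_3q_p1 .
lemma sh_h_m1: "Thj 0 (1/2) t (w + of_int (-1)) = - Thj 0 (1/2) t w"
  using Thj_wshift[of 0 "1/2" t w "-1"] unfolding e_h_m1 by simp
lemma sh_0: "Thj 0 0 t (w + of_int n) = Thj 0 0 t w"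
  using Thj_wshift[of 0 0 t w n] by simp

lemma Th_neg0: "Thj 0 c t (- w) = Thj 0 (- c) t w"
  using Thj_neg[of 0 c t w] by simp

lemma Q3:
  assumes t: "Im t > 0"
  shows "th3 t (x + y) * th1 t (x - y) * (th2 t 0 * th4 t 0) =
         th1 t x * th3 t x * (th2 t y * th4 t y) - th2 t x * th4 t x * (th1 t y * th3 t y)"
proof -
  define a where "a w = Thj 0 (1/4) (2 * t) (2 * w + 1/2)" for w
  define b where "b w = Thj 0 (3/4) (2 * t) (2 * w + 1/2)" for w
  define A where "A = Thj 0 (1/4) (2 * t) (1/2)"
  have B: "Thj 0 (3/4) (2 * t) (1/2) = - \<i> * A"
  proof -
    have "Thj 0 (3/4) (2 * t) (1/2) = Thj 0 (-1/4) (2 * t) (1/2)"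
      using Thj_cshift[of 0 "-1/4" 1 "2 * t" "1/2"] by simp
    also have "\<dots> = Thj 0 (1/4) (2 * t) (- (1/2))" using Th_neg0[of "1/4" "2 * t" "1/2"] by simp
    also have "- (1/2) = (1/2::complex) + of_int (-1)" by simp
    finally show ?thesis unfolding sh_q_m1 A_def .
  qed
  have Am: "Thj 0 (1/4) (2 * t) (- (1/2)) = - \<i> * A"
    using Th_neg0[of "1/4" "2 * t" "1/2"] B Thj_cshift[of 0 "-1/4" 1 "2 * t" "1/2"] by simp
  have Bm: "Thj 0 (3/4) (2 * t) (- (1/2)) = A"
  proof -
    have "Thj 0 (3/4) (2 * t) (- (1/2)) = Thj 0 (-3/4) (2 * t) (1/2)" using Th_neg0 by simp
    also have "\<dots> = A" unfolding A_def using Thj_cshift[of 0 "-3/4" 1 "2 * t" "1/2"] by simp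
    finally show ?thesis .
  qed
  have L1: "th3 t (x + y) * th1 t (x - y) = - \<i> * (a x * b y - b x * a y)"
  proof -
    have e1: "x + y + (x - y + 1/2) = 2 * x + 1/2" by simp
    have e2: "x + y - (x - y + 1/2) = (2 * y + 1/2) + of_int (-1)" by simp
    have "th3 t (x + y) * th1 t (x - y) = - (Thj 0 0 t (x + y) * Thj 0 (1/2) t (x - y + 1/2))"
      by (simp add: th3_def th1_def)
    also have "\<dots> = - (a x * (\<i> * b y) + b x * (- \<i> * a y))"
      using P0h[OF t, of "x + y" "x - y + 1/2"] unfolding e1 e2 sh_q_m1 sh_3q_m1 a_def b_def by simp
    finally show ?thesis by (simp add: algebra_simps)
  qed
  have L2: "th2 t 0 * th4 t 0 = - 2 * \<i> * A^2"
  proof -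
    have "th2 t 0 * th4 t 0 = Thj 0 (1/2) t 0 * Thj 0 0 t (1/2)" by (simp add: th2_def th4_def)
    also have "\<dots> = A * (- \<i> * A) + (- \<i> * A) * A"
      using Ph0[OF t, of 0 "1/2"] unfolding A_def using B Am Bm by (simp add: A_def)
    finally show ?thesis by (simp add: algebra_simps power2_eq_square)
  qed
  have L3: "th1 t w * th3 t w = - A * (a w - \<i> * b w)" for w
  proof -
    have "th1 t w * th3 t w = - (Thj 0 (1/2) t (w + 1/2) * Thj 0 0 t w)" by (simp add: th3_def th1_def)
    also have "\<dots> = - (a w * A + b w * (- \<i> * A))"
      using Ph0[OF t, of "w + 1/2" w] B unfolding a_def b_def A_def by (simp add: algebra_simps)
    finally show ?thesis by (simp add: algebra_simps)
  qed
  have L4: "th2 t w * th4 t w = A * (- \<i> * a w + b w)" for w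
  proof -
    have e2: "w - (w + 1/2) = - (1/2::complex)" by simp
    have "th2 t w * th4 t w = Thj 0 (1/2) t w * Thj 0 0 t (w + 1/2)" by (simp add: th2_def th4_def)
    also have "\<dots> = a w * (- \<i> * A) + b w * A"
      using Ph0[OF t, of w "w + 1/2"] unfolding e2 Am Bm unfolding a_def b_def by (simp add: algebra_simps)
    finally show ?thesis by (simp add: algebra_simps)
  qed
  show ?thesis unfolding L1 L2 unfolding L3 L4 by (simp add: algebra_simps power2_eq_square)
qed



lemma Q2:
  assumes t: "Im t > 0"
  shows "th2 t (x + y) * th1 t (x - y) * (th3 t 0 * th4 t 0) =
         th1 t x * th2 t x * (th3 t y * th4 t y) - th3 t x * th4 t x * (th1 t y * th2 t y)"
proof -
  define p where "p w = Thj 0 0 (2 * t) (2 * w + 1/2)" for w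
  define r where "r w = Thj 0 (1/2) (2 * t) (2 * w + 1/2)" for w
  define P where "P = Thj 0 0 (2 * t) (1/2)"
  have mh: "- (1/2) = (1/2::complex) + of_int (-1)" by simp
  have R0: "Thj 0 (1/2) (2 * t) (1/2) = 0"
  proof -
    have "Thj 0 (1/2) (2 * t) (- (1/2)) = Thj 0 (-1/2) (2 * t) (1/2)" using Th_neg0 by simp
    also have "\<dots> = Thj 0 (1/2) (2 * t) (1/2)" using Thj_cshift[of 0 "-1/2" 1 "2 * t" "1/2"] by simp
    finally have "Thj 0 (1/2) (2 * t) (1/2) = - Thj 0 (1/2) (2 * t) (1/2)"
      unfolding mh sh_h_m1 by simp
    then show ?thesis by simp
  qed
  have R0m: "Thj 0 (1/2) (2 * t) (- (1/2)) = 0" unfolding mh sh_h_m1 R0 by simp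
  have P0m: "Thj 0 0 (2 * t) (- (1/2)) = P" unfolding mh sh_0 P_def ..
  have L1: "th2 t (x + y) * th1 t (x - y) = - (r x * p y - p x * r y)"
  proof -
    have e1: "x + y + (x - y + 1/2) = 2 * x + 1/2" by simp
    have e2: "x + y - (x - y + 1/2) = (2 * y + 1/2) + of_int (-1)" by simp
    have "th2 t (x + y) * th1 t (x - y) = - (Thj 0 (1/2) t (x + y) * Thj 0 (1/2) t (x - y + 1/2))"
      by (simp add: th2_def th1_def)
    also have "\<dots> = - (r x * p y + p x * (- r y))"
      using Phh[OF t, of "x + y" "x - y + 1/2"] unfolding e1 e2 sh_h_m1 sh_0 p_def r_def by simp
    finally show ?thesis by (simp add: algebra_simps)
  qed
  have L2: "th3 t 0 * th4 t 0 = P^2"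
  proof -
    have "th3 t 0 * th4 t 0 = Thj 0 0 t 0 * Thj 0 0 t (1/2)" by (simp add: th3_def th4_def)
    also have "\<dots> = P * P"
      using P00[OF t, of 0 "1/2"] R0 R0m P0m by (simp add: P_def)
    finally show ?thesis by (simp add: power2_eq_square)
  qed
  have L3: "th1 t w * th2 t w = - P * r w" for w
  proof -
    have "th1 t w * th2 t w = - (Thj 0 (1/2) t (w + 1/2) * Thj 0 (1/2) t w)" by (simp add: th1_def th2_def)
    also have "\<dots> = - (r w * P)"
      using Phh[OF t, of "w + 1/2" w] R0 unfolding p_def r_def P_def by (simp add: algebra_simps)
    finally show ?thesis by (simp add: algebra_simps)
  qed
  have L4: "th3 t w * th4 t w = P * p w" for w
  proof -
    have e2: "w - (w + 1/2) = - (1/2::complex)" by simp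
    have "th3 t w * th4 t w = Thj 0 0 t w * Thj 0 0 t (w + 1/2)" by (simp add: th3_def th4_def)
    also have "\<dots> = p w * P"
      using P00[OF t, of w "w + 1/2"] unfolding e2 P0m R0m unfolding p_def r_def by (simp add: algebra_simps)
    finally show ?thesis by (simp add: algebra_simps)
  qed
  show ?thesis unfolding L1 L2 unfolding L3 L4 by (simp add: algebra_simps power2_eq_square)
qed



lemma Q4:
  assumes t: "Im t > 0"
  shows "th4 t (x + y) * th1 t (x - y) * (th2 t 0 * th3 t 0) =
         th1 t x * th4 t x * (th2 t y * th3 t y) - th2 t x * th3 t x * (th1 t y * th4 t y)"
proof -
  define u where "u w = Thj 0 (1/4) (2 * t) (2 * w)" for w
  define v where "v w = Thj 0 (3/4) (2 * t) (2 * w)" for w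
  define C where "C = Thj 0 (1/4) (2 * t) 0"
  have C3: "Thj 0 (3/4) (2 * t) 0 = C"
  proof -
    have "Thj 0 (3/4) (2 * t) 0 = Thj 0 (-1/4) (2 * t) 0"
      using Thj_cshift[of 0 "-1/4" 1 "2 * t" 0] by simp
    also have "\<dots> = Thj 0 (1/4) (2 * t) (- 0)" using Th_neg0[of "1/4" "2 * t" 0] by simp
    finally show ?thesis unfolding C_def by simp
  qed
  have L1: "th4 t (x + y) * th1 t (x - y) = - (\<i> * u x * v y - \<i> * v x * u y)"
  proof -
    have e1: "x + y + 1/2 + (x - y + 1/2) = 2 * x + of_int 1" by simp
    have e2: "x + y + 1/2 - (x - y + 1/2) = 2 * y" by simp
    have "th4 t (x + y) * th1 t (x - y) = - (Thj 0 0 t (x + y + 1/2) * Thj 0 (1/2) t (x - y + 1/2))"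
      by (simp add: th4_def th1_def)
    also have "\<dots> = - (\<i> * u x * v y + (- \<i>) * v x * u y)"
      using P0h[OF t, of "x + y + 1/2" "x - y + 1/2"] unfolding e1 e2 sh_q_p1 sh_3q_p1 u_def v_def by simp
    finally show ?thesis by (simp add: algebra_simps)
  qed
  have L2: "th2 t 0 * th3 t 0 = 2 * C^2"
  proof -
    have "th2 t 0 * th3 t 0 = Thj 0 (1/2) t 0 * Thj 0 0 t 0" by (simp add: th2_def th3_def)
    also have "\<dots> = C * C + C * C"
      using Ph0[OF t, of 0 0] C3 by (simp add: C_def)
    finally show ?thesis by (simp add: power2_eq_square)
  qed
  have L3: "th1 t w * th4 t w = - (\<i> * u w * C - \<i> * v w * C)" for w
  proof -
    have e1: "w + 1/2 + (w + 1/2) = 2 * w + of_int 1" by simp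
    have "th1 t w * th4 t w = - (Thj 0 (1/2) t (w + 1/2) * Thj 0 0 t (w + 1/2))" by (simp add: th1_def th4_def)
    also have "\<dots> = - (\<i> * u w * C + (- \<i>) * v w * C)"
      using Ph0[OF t, of "w + 1/2" "w + 1/2"] C3 unfolding e1 sh_q_p1 sh_3q_p1 u_def v_def C_def by simp
    finally show ?thesis by (simp add: algebra_simps)
  qed
  have L4: "th2 t w * th3 t w = u w * C + v w * C" for w
  proof -
    have "th2 t w * th3 t w = Thj 0 (1/2) t w * Thj 0 0 t w" by (simp add: th2_def th3_def)
    also have "\<dots> = u w * C + v w * C"
      using Ph0[OF t, of w w] C3 unfolding u_def v_def C_def mult_2[symmetric] by simp
    finally show ?thesis .
  qed
  show ?thesis unfolding L1 L2 unfolding L3 L4 by (simp add: algebra_simps power2_eq_square)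
qed



lemma abs1:
  fixes fa fj fk fl da dj dk dl :: "complex \<Rightarrow> complex" and kk :: complex
  assumes D1: "\<And>z. (fa has_field_derivative da z) (at z)"
      and Dj: "\<And>z. (fj has_field_derivative dj z) (at z)"
      and Dk: "\<And>z. (fk has_field_derivative dk z) (at z)"
      and Dl: "\<And>z. (fl has_field_derivative dl z) (at z)"
      and Q: "\<And>x y. fj (x + y) * fa (x - y) * kk = fa x * fj x * (fk y * fl y) - fk x * fl x * (fa y * fj y)"
      and z1: "fa 0 = 0" and zk: "dk 0 = 0" and zl: "dl 0 = 0"
  shows "kk * (dj x * fa x - fj x * da x) = - (da 0 * fj 0) * (fk x * fl x)"
proof -
  have a1: "((\<lambda>y. x + y) has_field_derivative 1) (at 0)" by (auto intro!: derivative_eq_intros)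
  have a2: "((\<lambda>y. x - y) has_field_derivative -1) (at 0)" by (auto intro!: derivative_eq_intros)
  have j: "((\<lambda>y. fj (x + y)) has_field_derivative dj x * 1) (at 0)"
    using DERIV_chain2[OF Dj a1] by simp
  have o: "((\<lambda>y. fa (x - y)) has_field_derivative da x * -1) (at 0)"
    using DERIV_chain2[OF D1 a2] by simp
  have L: "((\<lambda>y. fj (x + y) * fa (x - y) * kk) has_field_derivative (dj x * 1 * fa (x - 0) + da x * -1 * fj (x + 0)) * kk) (at 0)"
    by (intro DERIV_cmult_right DERIV_mult j o)
  have R: "((\<lambda>y. fa x * fj x * (fk y * fl y) - fk x * fl x * (fa y * fj y)) has_field_derivative
      fa x * fj x * (dk 0 * fl 0 + dl 0 * fk 0) - fk x * fl x * (da 0 * fj 0 + dj 0 * fa 0)) (at 0)"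
    by (intro DERIV_diff DERIV_cmult DERIV_mult Dk Dl D1 Dj)
  have "(dj x * 1 * fa (x - 0) + da x * -1 * fj (x + 0)) * kk =
      fa x * fj x * (dk 0 * fl 0 + dl 0 * fk 0) - fk x * fl x * (da 0 * fj 0 + dj 0 * fa 0)"
    by (rule DERIV_unique[OF L]) (use R Q in simp)
  then show ?thesis using z1 zk zl by (simp add: algebra_simps)
qed

lemma abs2:
  fixes fa fj fk fl da dj dk dl ea ej ek el ga gj :: "complex \<Rightarrow> complex" and kk c :: complex
  assumes D1: "\<And>z. (fa has_field_derivative da z) (at z)" "\<And>z. (da has_field_derivative ea z) (at z)" "\<And>z. (ea has_field_derivative ga z) (at z)"
      and Dj: "\<And>z. (fj has_field_derivative dj z) (at z)" "\<And>z. (dj has_field_derivative ej z) (at z)" "\<And>z. (ej has_field_derivative gj z) (at z)"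
      and Dk: "\<And>z. (fk has_field_derivative dk z) (at z)" "\<And>z. (dk has_field_derivative ek z) (at z)"
      and Dl: "\<And>z. (fl has_field_derivative dl z) (at z)" "\<And>z. (dl has_field_derivative el z) (at z)"
      and R1: "\<And>x. kk * (dj x * fa x - fj x * da x) = c * (fk x * fl x)"
      and z: "fa 0 = 0" "ea 0 = 0" "dj 0 = 0" "dk 0 = 0" "dl 0 = 0"
  shows "kk * (ej 0 * da 0 - fj 0 * ga 0) = c * (ek 0 * fl 0 + fk 0 * el 0)"
proof -
  have W1: "kk * (ej x * fa x + dj x * da x - (dj x * da x + fj x * ea x)) = c * (dk x * fl x + fk x * dl x)" for x
  proof -
    have L: "((\<lambda>x. kk * (dj x * fa x - fj x * da x)) has_field_derivative kk * ((ej x * fa x + da x * dj x) - (dj x * da x + ea x * fj x))) (at x)"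
      by (intro DERIV_cmult DERIV_diff DERIV_mult D1 Dj)
    have R: "((\<lambda>x. c * (fk x * fl x)) has_field_derivative c * (dk x * fl x + dl x * fk x)) (at x)"
      by (intro DERIV_cmult DERIV_mult Dk Dl)
    have "kk * ((ej x * fa x + da x * dj x) - (dj x * da x + ea x * fj x)) = c * (dk x * fl x + dl x * fk x)"
      by (rule DERIV_unique[OF L]) (use R R1 in simp)
    then show ?thesis by (simp add: algebra_simps)
  qed
  have W1': "kk * (ej x * fa x - fj x * ea x) = c * (dk x * fl x + fk x * dl x)" for x
    using W1[of x] by (simp add: algebra_simps)
  have L: "((\<lambda>x. kk * (ej x * fa x - fj x * ea x)) has_field_derivative kk * ((gj 0 * fa 0 + da 0 * ej 0) - (dj 0 * ea 0 + ga 0 * fj 0))) (at 0)"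
    by (intro DERIV_cmult DERIV_diff DERIV_mult D1 Dj)
  have R: "((\<lambda>x. c * (dk x * fl x + fk x * dl x)) has_field_derivative c * ((ek 0 * fl 0 + dl 0 * dk 0) + (dk 0 * dl 0 + el 0 * fk 0))) (at 0)"
    by (intro DERIV_cmult DERIV_add DERIV_mult Dk Dl)
  have "kk * ((gj 0 * fa 0 + da 0 * ej 0) - (dj 0 * ea 0 + ga 0 * fj 0)) = c * ((ek 0 * fl 0 + dl 0 * dk 0) + (dk 0 * dl 0 + el 0 * fk 0))"
    by (rule DERIV_unique[OF L]) (use R W1' in simp)
  then show ?thesis using z by (simp add: algebra_simps)
qed



definition T1 :: "nat \<Rightarrow> complex \<Rightarrow> complex \<Rightarrow> complex" where "T1 n t z = - Thj n (1/2) t (z + 1/2)"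
definition T2 :: "nat \<Rightarrow> complex \<Rightarrow> complex \<Rightarrow> complex" where "T2 n t z = Thj n (1/2) t z"
definition T3 :: "nat \<Rightarrow> complex \<Rightarrow> complex \<Rightarrow> complex" where "T3 n t z = Thj n 0 t z"
definition T4 :: "nat \<Rightarrow> complex \<Rightarrow> complex \<Rightarrow> complex" where "T4 n t z = Thj n 0 t (z + 1/2)"

lemma th_T: "th1 t = T1 0 t" "th2 t = T2 0 t" "th3 t = T3 0 t" "th4 t = T4 0 t"
  by (auto simp: fun_eq_iff th1_def th2_def th3_def th4_def T1_def T2_def T3_def T4_def)

lemma Thj_sderiv: "Im t > 0 \<Longrightarrow> ((\<lambda>z. Thj n c t (z + a)) has_field_derivative Thj (Suc n) c t (z + a)) (at z)"
  using Thj_deriv_w[of t n c "z + a"] DERIV_shift[of "\<lambda>w. Thj n c t w" "Thj (Suc n) c t (z + a)" z a] by simp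

lemma T_deriv:
  assumes "Im t > 0"
  shows "(T1 n t has_field_derivative T1 (Suc n) t z) (at z)"
    and "(T2 n t has_field_derivative T2 (Suc n) t z) (at z)"
    and "(T3 n t has_field_derivative T3 (Suc n) t z) (at z)"
    and "(T4 n t has_field_derivative T4 (Suc n) t z) (at z)"
proof -
  show "(T1 n t has_field_derivative T1 (Suc n) t z) (at z)"
    unfolding T1_def[abs_def] by (intro DERIV_minus Thj_sderiv[OF assms])
  show "(T4 n t has_field_derivative T4 (Suc n) t z) (at z)"
    unfolding T4_def[abs_def] by (intro Thj_sderiv[OF assms])
  show "(T2 n t has_field_derivative T2 (Suc n) t z) (at z)"
    unfolding T2_def[abs_def] using Thj_deriv_w[OF assms] by simp
  show "(T3 n t has_field_derivative T3 (Suc n) t z) (at z)"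
    unfolding T3_def[abs_def] using Thj_deriv_w[OF assms] by simp
qed

lemma par_a: "even n \<Longrightarrow> Thj n (1/2) t (1/2) = 0"
proof -
  assume n: "even n"
  have mh: "- (1/2) = (1/2::complex) + of_int (-1)" by simp
  have "Thj n (1/2) t (- (1/2)) = Thj n (-1/2) t (1/2)" using Thj_neg[of n "1/2" t "1/2"] n by simp
  also have "\<dots> = Thj n (1/2) t (1/2)" using Thj_cshift[of n "-1/2" 1 t "1/2"] by simp
  finally have "Thj n (1/2) t (1/2 + of_int (-1)) = Thj n (1/2) t (1/2)" unfolding mh .
  then have "exp (2 * of_real pi * \<i> * of_real (1/2) * of_int (-1)) * Thj n (1/2) t (1/2) = Thj n (1/2) t (1/2)"
    unfolding Thj_wshift .
  then show ?thesis unfolding e_h_m1 by simp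
qed

lemma par_b: "odd n \<Longrightarrow> Thj n (1/2) t 0 = 0"
proof -
  assume n: "odd n"
  have "Thj n (1/2) t (- 0) = - Thj n (-1/2) t 0" using Thj_neg[of n "1/2" t 0] n by simp
  also have "\<dots> = - Thj n (1/2) t 0" using Thj_cshift[of n "-1/2" 1 t 0] by simp
  finally show ?thesis by simp
qed

lemma par_c: "odd n \<Longrightarrow> Thj n 0 t 0 = 0"
proof -
  assume n: "odd n"
  have "Thj n 0 t (- 0) = - Thj n 0 t 0" using Thj_neg[of n 0 t 0] n by simp
  then show ?thesis by simp
qed

lemma par_d: "odd n \<Longrightarrow> Thj n 0 t (1/2) = 0"
proof -
  assume n: "odd n"
  have mh: "- (1/2) = (1/2::complex) + of_int (-1)" by simp
  have "Thj n 0 t (- (1/2)) = - Thj n 0 t (1/2)" using Thj_neg[of n 0 t "1/2"] n by simp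
  moreover have "Thj n 0 t (- (1/2)) = Thj n 0 t (1/2)" unfolding mh using Thj_wshift[of n 0 t "1/2" "-1"] by simp
  ultimately show ?thesis by simp
qed

lemma T_zero:
  "T1 0 t 0 = 0" "T1 2 t 0 = 0" "T2 1 t 0 = 0" "T3 1 t 0 = 0" "T4 1 t 0 = 0"
  by (simp_all add: T1_def T2_def T3_def T4_def par_a par_b par_c par_d)

lemma R1_3:
  assumes t: "Im t > 0"
  shows "(T2 0 t 0 * T4 0 t 0) * (T3 1 t x * T1 0 t x - T3 0 t x * T1 1 t x) = - (T1 1 t 0 * T3 0 t 0) * (T2 0 t x * T4 0 t x)"
  by (rule abs1[where fa="T1 0 t" and da="T1 1 t" and fj="T3 0 t" and dj="T3 1 t" and fk="T2 0 t" and dk="T2 1 t" and fl="T4 0 t" and dl="T4 1 t"])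
     (use Q3[OF t] T_zero T_deriv[OF t] in \<open>simp_all add: th_T\<close>)

lemma R1_2:
  assumes t: "Im t > 0"
  shows "(T3 0 t 0 * T4 0 t 0) * (T2 1 t x * T1 0 t x - T2 0 t x * T1 1 t x) = - (T1 1 t 0 * T2 0 t 0) * (T3 0 t x * T4 0 t x)"
  by (rule abs1[where fa="T1 0 t" and da="T1 1 t" and fj="T2 0 t" and dj="T2 1 t" and fk="T3 0 t" and dk="T3 1 t" and fl="T4 0 t" and dl="T4 1 t"])
     (use Q2[OF t] T_zero T_deriv[OF t] in \<open>simp_all add: th_T\<close>)

lemma R1_4:
  assumes t: "Im t > 0"
  shows "(T2 0 t 0 * T3 0 t 0) * (T4 1 t x * T1 0 t x - T4 0 t x * T1 1 t x) = - (T1 1 t 0 * T4 0 t 0) * (T2 0 t x * T3 0 t x)"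
  by (rule abs1[where fa="T1 0 t" and da="T1 1 t" and fj="T4 0 t" and dj="T4 1 t" and fk="T2 0 t" and dk="T2 1 t" and fl="T3 0 t" and dl="T3 1 t"])
     (use Q4[OF t] T_zero T_deriv[OF t] in \<open>simp_all add: th_T\<close>)

lemma JR:
  assumes t: "Im t > 0"
  shows "T1 3 t 0 * (T2 0 t 0 * T3 0 t 0 * T4 0 t 0) =
     T1 1 t 0 * (T2 2 t 0 * T3 0 t 0 * T4 0 t 0 + T2 0 t 0 * T3 2 t 0 * T4 0 t 0 + T2 0 t 0 * T3 0 t 0 * T4 2 t 0)"
proof -
  have "(T2 0 t 0 * T4 0 t 0) * (T3 2 t 0 * T1 1 t 0 - T3 0 t 0 * T1 3 t 0) =
      - (T1 1 t 0 * T3 0 t 0) * (T2 2 t 0 * T4 0 t 0 + T2 0 t 0 * T4 2 t 0)"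
    by (rule abs2[where fa="T1 0 t" and da="T1 1 t" and ea="T1 2 t" and ga="T1 3 t"
         and fj="T3 0 t" and dj="T3 1 t" and ej="T3 2 t" and gj="T3 3 t"
         and fk="T2 0 t" and dk="T2 1 t" and ek="T2 2 t" and fl="T4 0 t" and dl="T4 1 t" and el="T4 2 t"])
       (use R1_3[OF t] T_zero T_deriv[OF t] in \<open>simp_all add: numeral_eq_Suc\<close>)
  then show ?thesis by (simp add: algebra_simps)
qed



lemma exp_neg_lim: "(m::real) > 0 \<Longrightarrow> ((\<lambda>s. exp (- pi * m * s)) \<longlongrightarrow> 0) at_top"
proof -
  assume m: "m > 0"
  have "filterlim (\<lambda>s. (- pi * m) * s) at_bot at_top"
    by (rule filterlim_tendsto_neg_mult_at_bot[OF tendsto_const]) (use m in \<open>auto simp: filterlim_ident\<close>)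
  then show ?thesis using filterlim_compose[OF exp_at_bot] by (simp add: o_def)
qed

lemma ex_is: "exp (of_real (pi * c^2 * s)) * ex c (\<i> * of_real s) (of_real w) k =
   of_real (exp (- pi * ((of_int k + c)^2 - c^2) * s)) * exp (2 * of_real pi * \<i> * of_real (of_int k + c) * of_real w)"
proof -
  have "exp (of_real (pi * c^2 * s)) * ex c (\<i> * of_real s) (of_real w) k =
     exp (of_real (pi * c^2 * s) + (of_real pi * \<i> * (complex_of_real (of_int k + c))^2 * (\<i> * of_real s) + 2 * of_real pi * \<i> * complex_of_real (of_int k + c) * of_real w))"
    unfolding ex_def exp_add ..
  also have "\<dots> = exp (of_real (- pi * ((of_int k + c)^2 - c^2) * s) + 2 * of_real pi * \<i> * of_real (of_int k + c) * of_real w)"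
    by (rule arg_cong[where f=exp]) (simp add: algebra_simps power2_eq_square)
  also have "\<dots> = of_real (exp (- pi * ((of_int k + c)^2 - c^2) * s)) * exp (2 * of_real pi * \<i> * of_real (of_int k + c) * of_real w)"
    unfolding exp_add exp_of_real ..
  finally show ?thesis .
qed



lemma Th_lim:
  fixes c w :: real
  assumes m: "\<And>k::int. (of_int k + c)^2 - c^2 \<ge> 0"
  shows "((\<lambda>s. exp (of_real (pi * c^2 * s)) * Thj n c (\<i> * of_real s) (of_real w)) \<longlongrightarrow>
     (\<Sum>\<^sub>\<infinity>k. if (of_int k + c)^2 - c^2 = 0 then wt n c k * exp (2 * of_real pi * \<i> * of_real (of_int k + c) * of_real w) else 0)) at_top"
proof -
  define mm where "mm k = (of_int k + c)^2 - c^2" for k :: int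
  define E where "E k = exp (2 * of_real pi * \<i> * of_real (of_int k + c) * of_real w)" for k :: int
  define g where "g k s = wt n c k * (of_real (exp (- pi * mm k * s)) * E k)" for k s
  define l where "l k = (if mm k = 0 then wt n c k * E k else 0)" for k
  have nE: "norm (E k) = 1" for k unfolding E_def by (simp add: norm_exp_eq_Re)
  have eq: "exp (of_real (pi * c^2 * s)) * Thj n c (\<i> * of_real s) (of_real w) = (\<Sum>\<^sub>\<infinity>k. g k s)" for s
    unfolding Thj_def infsum_cmult_right'[symmetric]
  proof (rule infsum_cong)
    fix k
    show "exp (of_real (pi * c^2 * s)) * (wt n c k * ex c (\<i> * of_real s) (of_real w) k) = g k s"
      unfolding g_def mm_def E_def mult.left_commute[of "exp (of_real (pi * c^2 * s))"] ex_is ..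
  qed
  define M where "M k = norm (wt n c k) * exp (- pi * mm k)" for k
  have MS: "M summable_on UNIV"
  proof -
    have "(\<lambda>k. norm (wt n c k * ex c \<i> 0 k)) summable_on UNIV"
      using term_summable[of \<i> n c 0] by (simp add: summable_on_iff_abs_summable_on_complex)
    then have "(\<lambda>k. norm (wt n c k * ex c \<i> 0 k) * exp (pi * c^2)) summable_on UNIV"
      by (rule summable_on_cmult_left)
    moreover have "norm (wt n c k * ex c \<i> 0 k) * exp (pi * c^2) = M k" for k
    proof -
      have "ex c \<i> 0 k = of_real (exp (- pi * (of_int k + c)^2))"
        unfolding ex_def exp_of_real[symmetric] by (rule arg_cong[where f=exp]) (simp add: algebra_simps)
      then have "norm (ex c \<i> 0 k) = exp (- pi * (of_int k + c)^2)" by simp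
      then show ?thesis unfolding M_def mm_def norm_mult
        by (simp add: exp_add[symmetric] algebra_simps)
    qed
    ultimately show ?thesis by simp
  qed
  have bound: "norm (g k s) \<le> M k" if "s \<in> {1..}" for k s
  proof -
    have "mm k \<ge> 0" using m unfolding mm_def by simp
    moreover have "s \<ge> 1" using that by simp
    ultimately have "mm k * 1 \<le> mm k * s" by (intro mult_left_mono) auto
    then have "- pi * mm k * s \<le> - pi * mm k" by (simp add: mult_left_mono)
    then have "exp (- pi * mm k * s) \<le> exp (- pi * mm k)" by simp
    then show ?thesis unfolding g_def M_def norm_mult nE
      by (simp add: mult_left_mono)
  qed
  have lS: "l summable_on UNIV"
  proof -
    have "(\<lambda>k. norm (l k)) summable_on UNIV"
    proof (rule summable_on_comparison_test[OF MS])
      fix k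
      show "norm (l k) \<le> M k" unfolding l_def M_def by (auto simp: norm_mult nE)
    qed auto
    then show ?thesis by (simp add: summable_on_iff_abs_summable_on_complex)
  qed
  have lim_k: "((\<lambda>s. g k s) \<longlongrightarrow> l k) at_top" for k
  proof (cases "mm k = 0")
    case True
    then show ?thesis unfolding g_def l_def by simp
  next
    case False
    then have "mm k > 0" using m[of k] unfolding mm_def by linarith
    from exp_neg_lim[OF this] have "((\<lambda>s. wt n c k * (of_real (exp (- pi * mm k * s)) * E k)) \<longlongrightarrow> wt n c k * (of_real 0 * E k)) at_top"
      by (intro tendsto_intros) auto
    then show ?thesis unfolding g_def l_def using False by simp
  qed
  have ul: "uniform_limit {1..} (\<lambda>X s. \<Sum>k\<in>X. g k s) (\<lambda>s. \<Sum>\<^sub>\<infinity>k. g k s) (finite_subsets_at_top UNIV)"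
    by (rule Weierstrass_m_test_general[OF _ MS]) (use bound in auto)
  have "((\<lambda>s. \<Sum>\<^sub>\<infinity>k. g k s) \<longlongrightarrow> (\<Sum>\<^sub>\<infinity>k. l k)) at_top"
  proof (rule swap_uniform_limit'[OF _ _ ul])
    show "\<forall>\<^sub>F X in finite_subsets_at_top UNIV. ((\<lambda>s. \<Sum>k\<in>X. g k s) \<longlongrightarrow> (\<Sum>k\<in>X. l k)) at_top"
      by (intro always_eventually allI tendsto_sum lim_k)
    show "((\<lambda>X. \<Sum>k\<in>X. l k) \<longlongrightarrow> (\<Sum>\<^sub>\<infinity>k. l k)) (finite_subsets_at_top UNIV)"
      using has_sum_infsum[OF lS] unfolding has_sum_def by simp
    show "\<forall>\<^sub>F x in at_top. (x::real) \<in> {1..}" using eventually_ge_at_top[of "1::real"] by simp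
  qed auto
  then show ?thesis unfolding eq l_def mm_def E_def .
qed



lemma fin_infsum: "finite S \<Longrightarrow> (\<And>k. k \<notin> S \<Longrightarrow> f k = 0) \<Longrightarrow> infsum f UNIV = sum f S"
proof -
  assume "finite S" "\<And>k. k \<notin> S \<Longrightarrow> f k = 0"
  then have "infsum f UNIV = infsum f S" by (intro infsum_cong_neutral) auto
  then show ?thesis using \<open>finite S\<close> by simp
qed

lemma mh_eq: "(real_of_int k + 1/2)^2 - (1/2)^2 = real_of_int (k * (k + 1))"
  by (simp add: power2_eq_square algebra_simps)

lemma mh_iff: "(real_of_int k + 1/2)^2 - (1/2)^2 = 0 \<longleftrightarrow> k = 0 \<or> k = -1"
proof -
  have "k * (k + 1) = 0 \<longleftrightarrow> k = 0 \<or> k = -1" unfolding mult_eq_0_iff by arith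
  then show ?thesis unfolding mh_eq of_int_eq_0_iff .
qed

lemma mh_iff': "(real_of_int k + 1/2)^2 = (1/2)^2 \<longleftrightarrow> k = 0 \<or> k = -1"
  using mh_iff[of k] by simp

lemma mh_nonneg: "(real_of_int k + 1/2)^2 - (1/2)^2 \<ge> 0"
proof -
  have "k * (k + 1) \<ge> 0" by (cases "k \<ge> 0") (auto simp: zero_le_mult_iff)
  then show ?thesis unfolding mh_eq of_int_0_le_iff .
qed

lemma lim_T1:
  "((\<lambda>s. exp (of_real (pi * (1/2)^2 * s)) * Thj 1 (1/2) (\<i> * of_real s) (of_real (1/2))) \<longlongrightarrow> - 2 * of_real pi) at_top"
proof -
  define IF where "IF k = (if (of_int k + 1/2)^2 - (1/2)^2 = (0::real) then wt 1 (1/2) k * exp (2 * of_real pi * \<i> * of_real (of_int k + 1/2) * of_real (1/2)) else 0)" for k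
  have "infsum IF UNIV = sum IF {0,-1}"
    by (rule fin_infsum) (auto simp: mh_iff mh_iff' IF_def)
  also have "\<dots> = wt 1 (1/2) 0 * exp (2 * of_real pi * \<i> * of_real (of_int 0 + 1/2) * of_real (1/2))
     + wt 1 (1/2) (-1) * exp (2 * of_real pi * \<i> * of_real (of_int (-1) + 1/2) * of_real (1/2))"
    by (simp add: IF_def mh_iff)
  also have "\<dots> = - 2 * of_real pi"
  proof -
    have a: "exp (2 * of_real pi * \<i> * of_real (of_int 0 + 1/2) * of_real (1/2)) = \<i>"
      using eq1 by (simp add: mult_ac)
    have b: "exp (2 * of_real pi * \<i> * of_real (of_int (-1) + 1/2) * of_real (1/2)) = - \<i>"
    proof -
      have h: "2 * of_real pi * \<i> * of_real (of_int (-1) + 1/2) * of_real (1/2) = - (\<i> * of_real (pi/2))" by simp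
      show ?thesis unfolding h exp_minus eq1 by simp
    qed
    show ?thesis unfolding a b by (simp add: wt_def algebra_simps)
  qed
  finally show ?thesis using Th_lim[of "1/2" 1 "1/2"] mh_nonneg unfolding IF_def by simp
qed

lemma lim_T2:
  "((\<lambda>s. exp (of_real (pi * (1/2)^2 * s)) * Thj 0 (1/2) (\<i> * of_real s) (of_real 0)) \<longlongrightarrow> 2) at_top"
proof -
  define IF where "IF k = (if (of_int k + 1/2)^2 - (1/2)^2 = (0::real) then wt 0 (1/2) k * exp (2 * of_real pi * \<i> * of_real (of_int k + 1/2) * of_real 0) else 0)" for k
  have "infsum IF UNIV = sum IF {0,-1}"
    by (rule fin_infsum) (auto simp: mh_iff mh_iff' IF_def)
  also have "\<dots> = 2" by (simp add: IF_def mh_iff wt_def)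
  finally show ?thesis using Th_lim[of "1/2" 0 0] mh_nonneg unfolding IF_def by simp
qed

lemma lim_T3:
  "((\<lambda>s. Thj 0 0 (\<i> * of_real s) (of_real w)) \<longlongrightarrow> 1) at_top"
proof -
  define IF where "IF k = (if (of_int k + 0)^2 - 0^2 = (0::real) then wt 0 0 k * exp (2 * of_real pi * \<i> * of_real (of_int k + 0) * of_real w) else 0)" for k
  have "infsum IF UNIV = sum IF {0}"
    by (rule fin_infsum) (auto simp: IF_def)
  also have "\<dots> = 1" by (simp add: IF_def wt_def)
  finally show ?thesis using Th_lim[of 0 0 w] unfolding IF_def by simp
qed



lemma Thj_tderiv': "Im t > 0 \<Longrightarrow> ((\<lambda>t. Thj n c t w) has_field_derivative Thj (Suc (Suc n)) c t w / (4 * of_real pi * \<i>)) (at t)"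
  using Thj_deriv_t[of t n c w] by (simp add: numeral_2_eq_2)

lemma T_tderiv:
  assumes "Im t > 0"
  shows "((\<lambda>t. T1 n t 0) has_field_derivative T1 (Suc (Suc n)) t 0 / (4 * of_real pi * \<i>)) (at t)"
    and "((\<lambda>t. T2 n t 0) has_field_derivative T2 (Suc (Suc n)) t 0 / (4 * of_real pi * \<i>)) (at t)"
    and "((\<lambda>t. T3 n t 0) has_field_derivative T3 (Suc (Suc n)) t 0 / (4 * of_real pi * \<i>)) (at t)"
    and "((\<lambda>t. T4 n t 0) has_field_derivative T4 (Suc (Suc n)) t 0 / (4 * of_real pi * \<i>)) (at t)"
  using DERIV_minus[OF Thj_tderiv'[OF assms, of n "1/2" "1/2"]] Thj_tderiv'[OF assms]
  by (simp_all add: T1_def T2_def T3_def T4_def)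

definition DD :: "complex \<Rightarrow> complex" where "DD t = T1 1 t 0"
definition PP :: "complex \<Rightarrow> complex" where "PP t = T2 0 t 0 * T3 0 t 0 * T4 0 t 0"

lemma DD_deriv: "Im t > 0 \<Longrightarrow> (DD has_field_derivative T1 3 t 0 / (4 * of_real pi * \<i>)) (at t)"
  unfolding DD_def[abs_def] using T_tderiv(1)[of t 1] by (simp add: numeral_3_eq_3)

lemma PP_deriv: "Im t > 0 \<Longrightarrow> (PP has_field_derivative
   (T2 2 t 0 * T3 0 t 0 * T4 0 t 0 + T2 0 t 0 * T3 2 t 0 * T4 0 t 0 + T2 0 t 0 * T3 0 t 0 * T4 2 t 0) / (4 * of_real pi * \<i>)) (at t)"
proof -
  assume t: "Im t > 0"
  have "(PP has_field_derivative
    (T2 (Suc (Suc 0)) t 0 / (4 * of_real pi * \<i>) * T3 0 t 0 + T3 (Suc (Suc 0)) t 0 / (4 * of_real pi * \<i>) * T2 0 t 0) * T4 0 t 0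
    + T4 (Suc (Suc 0)) t 0 / (4 * of_real pi * \<i>) * (T2 0 t 0 * T3 0 t 0)) (at t)"
    unfolding PP_def[abs_def] by (intro DERIV_mult T_tderiv[OF t])
  then show ?thesis by (simp add: numeral_2_eq_2 field_simps)
qed

lemma DP_rel: "Im t > 0 \<Longrightarrow> T1 3 t 0 / (4 * of_real pi * \<i>) * PP t =
  DD t * ((T2 2 t 0 * T3 0 t 0 * T4 0 t 0 + T2 0 t 0 * T3 2 t 0 * T4 0 t 0 + T2 0 t 0 * T3 0 t 0 * T4 2 t 0) / (4 * of_real pi * \<i>))"
  using JR[of t] unfolding DD_def PP_def by (simp add: field_simps)

lemma lim_DD: "((\<lambda>s. exp (of_real (pi * (1/2)^2 * s)) * DD (\<i> * of_real s)) \<longlongrightarrow> 2 * of_real pi) at_top"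
  using tendsto_minus[OF lim_T1] by (simp add: DD_def T1_def)

lemma lim_PP: "((\<lambda>s. exp (of_real (pi * (1/2)^2 * s)) * PP (\<i> * of_real s)) \<longlongrightarrow> 2) at_top"
proof -
  have "((\<lambda>s. exp (of_real (pi * (1/2)^2 * s)) * Thj 0 (1/2) (\<i> * of_real s) (of_real 0) * Thj 0 0 (\<i> * of_real s) (of_real 0) * Thj 0 0 (\<i> * of_real s) (of_real (1/2))) \<longlongrightarrow> 2 * 1 * 1) at_top"
    by (intro tendsto_mult lim_T2 lim_T3)
  then show ?thesis by (simp add: PP_def T2_def T3_def T4_def mult_ac)
qed



lemma jacobi:
  assumes tt: "Im t > 0"
  shows "DD t = pi * PP t"
proof -
  define H where "H = {t. Im t > 0}"
  define e where "e s = (exp (of_real (pi * (1/2)^2 * s)) :: complex)" for s :: real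
  have oH: "open H" unfolding H_def by (simp add: open_halfspace_Im_gt)
  have cH: "connected H" unfolding H_def by auto
  have "\<forall>\<^sub>F s in at_top. e s * PP (\<i> * of_real s) \<noteq> 0"
    using tendsto_imp_eventually_ne[OF lim_PP[folded e_def], of 0] by simp
  moreover have "\<forall>\<^sub>F s in at_top. (s::real) > 0" by (rule eventually_gt_at_top)
  ultimately have "\<forall>\<^sub>F s in at_top. s > 0 \<and> e s * PP (\<i> * of_real s) \<noteq> 0" by eventually_elim auto
  then obtain s0 where s0: "s0 > 0" "e s0 * PP (\<i> * of_real s0) \<noteq> 0"
    unfolding eventually_at_top_linorder by auto
  define t0 where "t0 = \<i> * of_real s0"
  have Pt0: "PP t0 \<noteq> 0" using s0 unfolding t0_def by simp
  have It0: "Im t0 = s0" unfolding t0_def by simp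
  have "isCont PP t0" using PP_deriv[of t0] It0 s0 by (intro DERIV_isCont) auto
  then obtain \<epsilon> where \<epsilon>: "\<epsilon> > 0" "\<And>y. dist t0 y < \<epsilon> \<Longrightarrow> PP y \<noteq> 0"
    using continuous_at_avoid[of t0 PP 0] Pt0 by (auto simp: continuous_at)
  define r where "r = min \<epsilon> s0"
  have r: "r > 0" unfolding r_def using \<epsilon> s0 by simp
  define B where "B = ball t0 r"
  have BH: "B \<subseteq> H"
  proof
    fix y assume "y \<in> B"
    then have "dist t0 y < s0" unfolding B_def r_def by simp
    then have "\<bar>Im y - Im t0\<bar> < s0" by (metis Im_cball dist_commute less_le_not_le mem_cball not_le order.strict_trans1)
    then show "y \<in> H" unfolding H_def using It0 by simp
  qed
  have BP: "PP y \<noteq> 0" if "y \<in> B" for y using that \<epsilon>(2) unfolding B_def r_def by simp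
  have "\<exists>c. \<forall>y\<in>B. DD y / PP y = c"
  proof (rule has_field_derivative_zero_constant)
    show "convex B" unfolding B_def by simp
    fix y assume y: "y \<in> B"
    then have Iy: "Im y > 0" using BH unfolding H_def by auto
    have "((\<lambda>x. DD x / PP x) has_field_derivative
        (T1 3 y 0 / (4 * of_real pi * \<i>) * PP y - DD y * ((T2 2 y 0 * T3 0 y 0 * T4 0 y 0 + T2 0 y 0 * T3 2 y 0 * T4 0 y 0 + T2 0 y 0 * T3 0 y 0 * T4 2 y 0) / (4 * of_real pi * \<i>))) / (PP y * PP y)) (at y)"
      by (rule DERIV_divide[OF DD_deriv[OF Iy] PP_deriv[OF Iy] BP[OF y]])
    then have "((\<lambda>x. DD x / PP x) has_field_derivative 0) (at y)"
      unfolding DP_rel[OF Iy] by simp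
    then show "((\<lambda>x. DD x / PP x) has_field_derivative 0) (at y within B)"
      by (rule has_field_derivative_at_within)
  qed
  then obtain c0 where c0: "\<And>y. y \<in> B \<Longrightarrow> DD y / PP y = c0" by blast
  have holo: "(\<lambda>t. DD t - c0 * PP t) holomorphic_on H"
  proof (subst holomorphic_on_open[OF oH], intro ballI exI)
    fix x assume "x \<in> H"
    then have Ix: "Im x > 0" unfolding H_def by simp
    show "((\<lambda>t. DD t - c0 * PP t) has_field_derivative
       T1 3 x 0 / (4 * of_real pi * \<i>) - c0 * ((T2 2 x 0 * T3 0 x 0 * T4 0 x 0 + T2 0 x 0 * T3 2 x 0 * T4 0 x 0 + T2 0 x 0 * T3 0 x 0 * T4 2 x 0) / (4 * of_real pi * \<i>))) (at x)"
      by (intro DERIV_diff DERIV_cmult DD_deriv PP_deriv Ix)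
  qed
  have all: "DD w - c0 * PP w = 0" if "w \<in> H" for w
  proof (rule analytic_continuation[OF holo oH cH BH])
    show "t0 \<in> H" unfolding H_def using It0 s0 by simp
    show "t0 islimpt B" unfolding B_def using r by (simp add: islimpt_ball)
    show "w \<in> H" by (rule that)
    fix z assume "z \<in> B"
    then show "DD z - c0 * PP z = 0" using c0[of z] BP[of z] by (simp add: field_simps)
  qed
  have ev: "\<forall>\<^sub>F s in at_top. e s * DD (\<i> * of_real s) = c0 * (e s * PP (\<i> * of_real s))"
    using eventually_gt_at_top[of "0::real"]
  proof eventually_elim
    case (elim s)
    then have "\<i> * of_real s \<in> H" unfolding H_def by simp
    from all[OF this] show ?case by (simp add: algebra_simps)
  qed
  have "((\<lambda>s. e s * DD (\<i> * of_real s)) \<longlongrightarrow> c0 * 2) at_top"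
    using tendsto_cong[OF ev] tendsto_mult_left[OF lim_PP[folded e_def], of c0] by simp
  then have "c0 * 2 = 2 * of_real pi"
    using lim_DD[folded e_def] tendsto_unique by (metis trivial_limit_at_top_linorder)
  then have c0pi: "c0 = pi" by simp
  show ?thesis using all[of t] tt c0pi unfolding H_def by simp
qed



definition HH :: "complex set" where "HH = {t. Im t > 0}"

lemma HH_open: "open HH" unfolding HH_def by (simp add: open_halfspace_Im_gt)
lemma HH_conn: "connected HH" unfolding HH_def by auto

lemma Thj_holo: "(\<lambda>t. Thj n c t w) holomorphic_on HH"
proof (subst holomorphic_on_open[OF HH_open], intro ballI exI)
  fix x assume "x \<in> HH"
  then show "((\<lambda>t. Thj n c t w) has_field_derivative Thj (n+2) c x w / (4 * of_real pi * \<i>)) (at x)"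
    by (intro Thj_deriv_t) (simp add: HH_def)
qed

lemma T_holo: "(\<lambda>t. T1 n t x) holomorphic_on HH" "(\<lambda>t. T2 n t x) holomorphic_on HH"
  "(\<lambda>t. T3 n t x) holomorphic_on HH" "(\<lambda>t. T4 n t x) holomorphic_on HH"
  unfolding T1_def T2_def T3_def T4_def by (auto intro!: holomorphic_intros Thj_holo)

lemma prod_zero:
  assumes f: "f holomorphic_on HH" and g: "g holomorphic_on HH" and t0: "t0 \<in> HH" "g t0 \<noteq> 0"
    and fg: "\<And>t. t \<in> HH \<Longrightarrow> g t * f t = 0" and w: "w \<in> HH"
  shows "f w = 0"
proof -
  have "continuous (at t0) g"
    using g t0(1) HH_open by (meson holomorphic_on_imp_continuous_on continuous_on_eq_continuous_at)
  then obtain \<epsilon> where \<epsilon>: "\<epsilon> > 0" "\<And>y. dist t0 y < \<epsilon> \<Longrightarrow> g y \<noteq> 0"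
    using continuous_at_avoid[of t0 g 0] t0 by auto
  obtain r where r: "r > 0" "ball t0 r \<subseteq> HH" using HH_open t0(1) open_contains_ball by blast
  define B where "B = ball t0 (min r \<epsilon>)"
  have BH: "B \<subseteq> HH" using r unfolding B_def by auto
  show ?thesis
  proof (rule analytic_continuation[OF f HH_open HH_conn BH t0(1)])
    show "t0 islimpt B" unfolding B_def using r \<epsilon> by (simp add: islimpt_ball)
    fix z assume "z \<in> B"
    then have "g z \<noteq> 0" "z \<in> HH" using \<epsilon>(2)[of z] BH unfolding B_def by auto
    then show "f z = 0" using fg[of z] by simp
  qed (rule w)
qed

lemma PP_nz: "\<exists>t0. Im t0 > 0 \<and> PP t0 \<noteq> 0"
proof -
  define e where "e s = (exp (of_real (pi * (1/2)^2 * s)) :: complex)" for s :: real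
  have "\<forall>\<^sub>F s in at_top. e s * PP (\<i> * of_real s) \<noteq> 0"
    using tendsto_imp_eventually_ne[OF lim_PP[folded e_def], of 0] by simp
  moreover have "\<forall>\<^sub>F s in at_top. (s::real) > 0" by (rule eventually_gt_at_top)
  ultimately have "\<forall>\<^sub>F s in at_top. s > 0 \<and> e s * PP (\<i> * of_real s) \<noteq> 0" by eventually_elim auto
  then obtain s0 where s0: "s0 > 0" "e s0 * PP (\<i> * of_real s0) \<noteq> 0"
    unfolding eventually_at_top_linorder by auto
  then show ?thesis by (intro exI[of _ "\<i> * of_real s0"]) simp
qed

lemma K3:
  assumes t: "Im t > 0"
  shows "T3 1 t x * T1 0 t x - T3 0 t x * T1 1 t x = - pi * (T3 0 t 0)^2 * (T2 0 t x * T4 0 t x)"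
proof -
  obtain t0 where t0: "Im t0 > 0" "PP t0 \<noteq> 0" using PP_nz by blast
  have "(\<lambda>t. (T3 1 t x * T1 0 t x - T3 0 t x * T1 1 t x) - (- pi * (T3 0 t 0)^2 * (T2 0 t x * T4 0 t x))) t = 0"
  proof (rule prod_zero[of "\<lambda>t. (T3 1 t x * T1 0 t x - T3 0 t x * T1 1 t x) - (- pi * (T3 0 t 0)^2 * (T2 0 t x * T4 0 t x))" "\<lambda>t. T2 0 t 0 * T4 0 t 0" t0 t])
    show "(\<lambda>t. (T3 1 t x * T1 0 t x - T3 0 t x * T1 1 t x) - (- pi * (T3 0 t 0)^2 * (T2 0 t x * T4 0 t x))) holomorphic_on HH"
      by (intro holomorphic_intros T_holo)
    show "(\<lambda>t. T2 0 t 0 * T4 0 t 0) holomorphic_on HH" by (intro holomorphic_intros T_holo)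
    show "t0 \<in> HH" "T2 0 t0 0 * T4 0 t0 0 \<noteq> 0" using t0 unfolding HH_def PP_def by auto
    show "t \<in> HH" using t unfolding HH_def by simp
    fix s assume "s \<in> HH"
    then have s: "Im s > 0" unfolding HH_def by simp
    show "T2 0 s 0 * T4 0 s 0 * ((T3 1 s x * T1 0 s x - T3 0 s x * T1 1 s x) - (- pi * (T3 0 s 0)^2 * (T2 0 s x * T4 0 s x))) = 0"
      using R1_3[OF s, of x] jacobi[OF s] unfolding DD_def PP_def by (simp add: algebra_simps power2_eq_square)
  qed
  then show ?thesis by (simp only: right_minus_eq)
qed

lemma K2:
  assumes t: "Im t > 0"
  shows "T2 1 t x * T1 0 t x - T2 0 t x * T1 1 t x = - pi * (T2 0 t 0)^2 * (T3 0 t x * T4 0 t x)"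
proof -
  obtain t0 where t0: "Im t0 > 0" "PP t0 \<noteq> 0" using PP_nz by blast
  have "(\<lambda>t. (T2 1 t x * T1 0 t x - T2 0 t x * T1 1 t x) - (- pi * (T2 0 t 0)^2 * (T3 0 t x * T4 0 t x))) t = 0"
  proof (rule prod_zero[of "\<lambda>t. (T2 1 t x * T1 0 t x - T2 0 t x * T1 1 t x) - (- pi * (T2 0 t 0)^2 * (T3 0 t x * T4 0 t x))" "\<lambda>t. T3 0 t 0 * T4 0 t 0" t0 t])
    show "(\<lambda>t. (T2 1 t x * T1 0 t x - T2 0 t x * T1 1 t x) - (- pi * (T2 0 t 0)^2 * (T3 0 t x * T4 0 t x))) holomorphic_on HH"
      by (intro holomorphic_intros T_holo)
    show "(\<lambda>t. T3 0 t 0 * T4 0 t 0) holomorphic_on HH" by (intro holomorphic_intros T_holo)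
    show "t0 \<in> HH" "T3 0 t0 0 * T4 0 t0 0 \<noteq> 0" using t0 unfolding HH_def PP_def by auto
    show "t \<in> HH" using t unfolding HH_def by simp
    fix s assume "s \<in> HH"
    then have s: "Im s > 0" unfolding HH_def by simp
    show "T3 0 s 0 * T4 0 s 0 * ((T2 1 s x * T1 0 s x - T2 0 s x * T1 1 s x) - (- pi * (T2 0 s 0)^2 * (T3 0 s x * T4 0 s x))) = 0"
      using R1_2[OF s, of x] jacobi[OF s] unfolding DD_def PP_def by (simp add: algebra_simps power2_eq_square)
  qed
  then show ?thesis by (simp only: right_minus_eq)
qed

lemma K4:
  assumes t: "Im t > 0"
  shows "T4 1 t x * T1 0 t x - T4 0 t x * T1 1 t x = - pi * (T4 0 t 0)^2 * (T2 0 t x * T3 0 t x)"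
proof -
  obtain t0 where t0: "Im t0 > 0" "PP t0 \<noteq> 0" using PP_nz by blast
  have "(\<lambda>t. (T4 1 t x * T1 0 t x - T4 0 t x * T1 1 t x) - (- pi * (T4 0 t 0)^2 * (T2 0 t x * T3 0 t x))) t = 0"
  proof (rule prod_zero[of "\<lambda>t. (T4 1 t x * T1 0 t x - T4 0 t x * T1 1 t x) - (- pi * (T4 0 t 0)^2 * (T2 0 t x * T3 0 t x))" "\<lambda>t. T2 0 t 0 * T3 0 t 0" t0 t])
    show "(\<lambda>t. (T4 1 t x * T1 0 t x - T4 0 t x * T1 1 t x) - (- pi * (T4 0 t 0)^2 * (T2 0 t x * T3 0 t x))) holomorphic_on HH"
      by (intro holomorphic_intros T_holo)
    show "(\<lambda>t. T2 0 t 0 * T3 0 t 0) holomorphic_on HH" by (intro holomorphic_intros T_holo)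
    show "t0 \<in> HH" "T2 0 t0 0 * T3 0 t0 0 \<noteq> 0" using t0 unfolding HH_def PP_def by auto
    show "t \<in> HH" using t unfolding HH_def by simp
    fix s assume "s \<in> HH"
    then have s: "Im s > 0" unfolding HH_def by simp
    show "T2 0 s 0 * T3 0 s 0 * ((T4 1 s x * T1 0 s x - T4 0 s x * T1 1 s x) - (- pi * (T4 0 s 0)^2 * (T2 0 s x * T3 0 s x))) = 0"
      using R1_4[OF s, of x] jacobi[OF s] unfolding DD_def PP_def by (simp add: algebra_simps power2_eq_square)
  qed
  then show ?thesis by (simp only: right_minus_eq)
qed



lemma TC: "theta_char a b z \<tau> = Thj 0 (of_int a / 2) \<tau> (z + of_int b / 2)"
  unfolding theta_char_def Thj0 ex_def by simp

lemma TC': assumes "Im \<tau> > 0" shows "theta_char' a b z \<tau> = Thj 1 (of_int a / 2) \<tau> (z + of_int b / 2)"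
proof -
  have "(\<lambda>w. theta_char a b w \<tau>) = (\<lambda>w. Thj 0 (of_int a / 2) \<tau> (w + of_int b / 2))" by (simp add: TC)
  then show ?thesis unfolding theta_char'_def
    using DERIV_imp_deriv[OF Thj_sderiv[OF assms, of 0 "of_int a / 2" "of_int b / 2" z]] by simp
qed

lemma TN: "theta_null a b \<tau> = Thj 0 (of_int a / 2) \<tau> (of_int b / 2)"
  unfolding theta_null_def TC by simp

lemma TH1: "theta1 z \<tau> = T1 0 \<tau> z"
  unfolding theta1_def TC T1_def by simp

lemma TH1': assumes "Im \<tau> > 0" shows "theta1' z \<tau> = T1 1 \<tau> z"
proof -
  have "(\<lambda>w. theta1 w \<tau>) = T1 0 \<tau>" by (simp add: fun_eq_iff TH1)
  then show ?thesis unfolding theta1'_def using DERIV_imp_deriv[OF T_deriv(1)[OF assms, of 0 z]] by simp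
qed

lemma of_int_divmod2: "(of_int a :: 'a::ring_1) = 2 * of_int (a div 2) + of_int (a mod 2)"
proof -
  have "a = 2 * (a div 2) + a mod 2" by simp
  then have "(of_int a :: 'a) = of_int (2 * (a div 2) + a mod 2)" by (rule arg_cong)
  then show ?thesis by (simp only: of_int_add of_int_mult of_int_numeral)
qed

lemma R_c: "Thj j (of_int a / 2) t W = Thj j (of_int (a mod 2) / 2) t W"
proof -
  have h: "(of_int a / 2 :: real) = of_int (a mod 2) / 2 + of_int (a div 2)"
    by (subst of_int_divmod2) (simp add: field_simps)
  show ?thesis by (simp only: h Thj_cshift)
qed

lemma R_w: "Thj j c t (z + of_int b / 2) = exp (2 * of_real pi * \<i> * of_real c * of_int (b div 2)) * Thj j c t (z + of_int (b mod 2) / 2)"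
proof -
  have h: "z + of_int b / 2 = (z + of_int (b mod 2) / 2) + of_int (b div 2)"
  proof -
    show ?thesis by (subst of_int_divmod2) (simp add: field_simps)
  qed
  show ?thesis by (simp only: h Thj_wshift)
qed

lemma sgn_exp: "exp (2 * of_real pi * \<i> * of_real (1/2) * of_int q) = (-1) ^ nat (q mod 2)"
proof -
  have q: "q = 2 * (q div 2) + q mod 2" by simp
  have "2 * of_real pi * \<i> * of_real (1/2) * of_int q = 2 * of_real pi * \<i> * of_int (q div 2) + of_real pi * \<i> * of_int (q mod 2)"
    by (subst of_int_divmod2) (simp add: algebra_simps)
  then have "exp (2 * of_real pi * \<i> * of_real (1/2) * of_int q) = exp (of_real pi * \<i> * of_int (q mod 2))"
    by (simp add: exp_add exp_2pi_int)
  moreover have "q mod 2 = 0 \<or> q mod 2 = 1" by presburger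
  ultimately show ?thesis by auto
qed



lemma Th_mhalf: "Thj j (- 1/2) t w = Thj j (1/2) t w"
  using Thj_cshift[of j "- 1/2" 1 t w] by simp

lemma Th0_mhalf: "Thj j 0 t (z + - 1/2) = Thj j 0 t (z + 1/2)"
proof -
  have "z + - 1/2 = (z + 1/2) + of_int (-1)" by simp
  then show ?thesis using Thj_wshift[of j 0 t "z + 1/2" "-1"] by simp
qed

lemma KEYb:
  assumes t: "Im t > 0" and a: "a = 0 \<or> a = 1" and b: "b = 0 \<or> b = 1"
  shows "Thj 1 (of_int a / 2) t (z + of_int b / 2) * T1 0 t z - T1 1 t z * Thj 0 (of_int a / 2) t (z + of_int b / 2) =
    - pi * (Thj 0 (of_int a / 2) t (of_int b / 2))^2 * Thj 0 (of_int (a - 1) / 2) t z * Thj 0 0 t (z + of_int (b - 1) / 2)"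
proof -
  consider "a = 0" "b = 0" | "a = 1" "b = 0" | "a = 0" "b = 1" | "a = 1" "b = 1" using a b by blast
  then show ?thesis
  proof cases
    case 1
    then show ?thesis using K3[OF t, of z] Th_mhalf Th0_mhalf
      by (simp add: T1_def T2_def T3_def T4_def algebra_simps)
  next
    case 2
    then show ?thesis using K2[OF t, of z] Th0_mhalf
      by (simp add: T1_def T2_def T3_def T4_def algebra_simps)
  next
    case 3
    then show ?thesis using K4[OF t, of z] Th_mhalf
      by (simp add: T1_def T2_def T3_def T4_def algebra_simps)
  next
    case 4
    then show ?thesis using par_a[of 0 t]
      by (simp add: T1_def algebra_simps)
  qed
qed



lemma sigma_sign:
  "exp (2 * of_real pi * \<i> * of_real (of_int (a mod 2) / 2) * of_int q) = ((-1) ^ nat ((a * q) mod 2) :: complex)"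
proof -
  have "a mod 2 = 0 \<or> a mod 2 = 1" by presburger
  then show ?thesis
  proof
    assume h: "a mod 2 = 0"
    then have "(a * q) mod 2 = 0" by (metis mod_mult_left_eq mult_zero_left mod_0)
    then show ?thesis using h by simp
  next
    assume h: "a mod 2 = 1"
    then have "(a * q) mod 2 = q mod 2" by (metis mod_mult_left_eq mult_1)
    then show ?thesis using h sgn_exp[of q] by simp
  qed
qed

lemma sigma_sq: "(exp (2 * of_real pi * \<i> * of_real (of_int a0 / 2) * of_int q))^2 = 1"
proof -
  have "(exp (2 * of_real pi * \<i> * of_real (of_int a0 / 2) * of_int q))^2 = exp (2 * of_real pi * \<i> * of_int (a0 * q))"
    by (simp add: exp_of_nat_mult[symmetric] algebra_simps)
  then show ?thesis using exp_2pi_int[of "a0 * q"] by simp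
qed

lemma KEY:
  assumes t: "Im t > 0"
  shows "Thj 1 (of_int a / 2) t (z + of_int b / 2) * T1 0 t z - T1 1 t z * Thj 0 (of_int a / 2) t (z + of_int b / 2) =
    - ((-1) ^ nat ((a * \<lfloor>of_int b / (2::real)\<rfloor>) mod 2) * pi * (Thj 0 (of_int a / 2) t (of_int b / 2))^2
      * Thj 0 (of_int (a - 1) / 2) t z * Thj 0 0 t (z + of_int (b - 1) / 2))"
proof -
  define a0 where "a0 = a mod 2"
  define b0 where "b0 = b mod 2"
  define q where "q = b div 2"
  define \<sigma> where "\<sigma> = exp (2 * of_real pi * \<i> * of_real (of_int a0 / 2) * of_int q)"
  have F: "Thj j (of_int a / 2) t (w + of_int b / 2) = \<sigma> * Thj j (of_int a0 / 2) t (w + of_int b0 / 2)" for j w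
    unfolding \<sigma>_def a0_def b0_def q_def by (subst R_c) (rule R_w)
  have F0: "Thj 0 (of_int a / 2) t (of_int b / 2) = \<sigma> * Thj 0 (of_int a0 / 2) t (of_int b0 / 2)"
    using F[of 0 0] by simp
  have G1: "Thj 0 (of_int (a - 1) / 2) t z = Thj 0 (of_int (a0 - 1) / 2) t z"
  proof -
    have "(a - 1) mod 2 = (a0 - 1) mod 2" unfolding a0_def by (simp add: mod_diff_left_eq)
    then show ?thesis by (metis R_c)
  qed
  have G2: "Thj 0 0 t (z + of_int (b - 1) / 2) = Thj 0 0 t (z + of_int (b0 - 1) / 2)"
  proof -
    have "(b - 1) mod 2 = (b0 - 1) mod 2" unfolding b0_def by (simp add: mod_diff_left_eq)
    then show ?thesis using R_w[of 0 0 t z "b - 1"] R_w[of 0 0 t z "b0 - 1"] by simp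
  qed
  have s: "complex_of_real ((-1) ^ nat ((a * \<lfloor>of_int b / (2::real)\<rfloor>) mod 2)) = \<sigma>"
  proof -
    have "\<lfloor>of_int b / (2::real)\<rfloor> = q" unfolding q_def using floor_divide_of_int_eq[of b 2] by simp
    then show ?thesis unfolding \<sigma>_def a0_def using sigma_sign[of a q] by simp
  qed
  have ab: "a0 = 0 \<or> a0 = 1" "b0 = 0 \<or> b0 = 1" unfolding a0_def b0_def by presburger+
  have B: "Thj 1 (of_int a0 / 2) t (z + of_int b0 / 2) * T1 0 t z - T1 1 t z * Thj 0 (of_int a0 / 2) t (z + of_int b0 / 2) =
    - pi * (Thj 0 (of_int a0 / 2) t (of_int b0 / 2))^2 * Thj 0 (of_int (a0 - 1) / 2) t z * Thj 0 0 t (z + of_int (b0 - 1) / 2)"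
    by (rule KEYb[OF t ab])
  have sq: "\<sigma>^2 = 1" unfolding \<sigma>_def by (rule sigma_sq)
  have "Thj 1 (of_int a / 2) t (z + of_int b / 2) * T1 0 t z - T1 1 t z * Thj 0 (of_int a / 2) t (z + of_int b / 2)
     = \<sigma> * (Thj 1 (of_int a0 / 2) t (z + of_int b0 / 2) * T1 0 t z - T1 1 t z * Thj 0 (of_int a0 / 2) t (z + of_int b0 / 2))"
    unfolding F by (simp add: algebra_simps)
  also have "\<dots> = - \<sigma> * pi * (\<sigma>^2 * (Thj 0 (of_int a0 / 2) t (of_int b0 / 2))^2) * Thj 0 (of_int (a0 - 1) / 2) t z * Thj 0 0 t (z + of_int (b0 - 1) / 2)"
    unfolding B sq by simp
  also have "\<dots> = - \<sigma> * pi * (Thj 0 (of_int a / 2) t (of_int b / 2))^2 * Thj 0 (of_int (a - 1) / 2) t z * Thj 0 0 t (z + of_int (b - 1) / 2)"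
    unfolding F0 G1 G2 by (simp add: power_mult_distrib)
  finally have c: "Thj 1 (of_int a / 2) t (z + of_int b / 2) * T1 0 t z - T1 1 t z * Thj 0 (of_int a / 2) t (z + of_int b / 2) =
    - \<sigma> * pi * (Thj 0 (of_int a / 2) t (of_int b / 2))^2 * Thj 0 (of_int (a - 1) / 2) t z * Thj 0 0 t (z + of_int (b - 1) / 2)" .
  show ?thesis unfolding c s[symmetric] by (simp add: algebra_simps)
qed



lemma ex_mshift_aux:
  fixes k al m W tau :: complex
  shows "pi * \<i> * (k + al / 2)^2 * tau + 2 * pi * \<i> * (k + al / 2) * (W + m * tau / 2) =
    (- (pi * \<i> * m^2 * tau / 4) - pi * \<i> * m * W) + (pi * \<i> * (k + (al + m) / 2)^2 * tau + 2 * pi * \<i> * (k + (al + m) / 2) * W)"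
  by (simp add: field_simps power2_eq_square)

lemma ex_mshift: "ex (of_int al / 2) tau (W + of_int m * tau / 2) k =
   exp (- (pi * \<i> * of_int m^2 * tau / 4) - pi * \<i> * of_int m * W) * ex (of_int (al + m) / 2) tau W k"
  unfolding ex_def exp_add[symmetric]
  using ex_mshift_aux[of "of_int k" "of_int al" tau W "of_int m"]
  by (intro arg_cong[where f=exp]) simp

lemma SH: "Thj 0 (of_int al / 2) tau (W + of_int m * tau / 2) =
   exp (- (pi * \<i> * of_int m^2 * tau / 4) - pi * \<i> * of_int m * W) * Thj 0 (of_int (al + m) / 2) tau W"
  unfolding Thj0 ex_mshift by (rule infsum_cmult_right')

lemma SHD:
  assumes t: "Im tau > 0"
  shows "Thj 1 (of_int al / 2) tau (z + of_int b / 2 + of_int m * tau / 2) =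
    exp (- (pi * \<i> * of_int m^2 * tau / 4) - pi * \<i> * of_int m * (z + of_int b / 2)) *
      (Thj 1 (of_int (al + m) / 2) tau (z + of_int b / 2) - pi * \<i> * of_int m * Thj 0 (of_int (al + m) / 2) tau (z + of_int b / 2))"
proof -
  define E where "E w = exp (- (pi * \<i> * of_int m^2 * tau / 4) - pi * \<i> * of_int m * w)" for w
  have L: "((\<lambda>z. Thj 0 (of_int al / 2) tau (z + (of_int b / 2 + of_int m * tau / 2))) has_field_derivative
      Thj 1 (of_int al / 2) tau (z + (of_int b / 2 + of_int m * tau / 2))) (at z)"
    using Thj_sderiv[OF t] by simp
  have R: "((\<lambda>z. E (z + of_int b / 2) * Thj 0 (of_int (al + m) / 2) tau (z + of_int b / 2)) has_field_derivative
      E (z + of_int b / 2) * (- (pi * \<i> * of_int m)) * Thj 0 (of_int (al + m) / 2) tau (z + of_int b / 2)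
      + Thj 1 (of_int (al + m) / 2) tau (z + of_int b / 2) * E (z + of_int b / 2)) (at z)"
  proof (rule DERIV_mult)
    show "((\<lambda>z. E (z + of_int b / 2)) has_field_derivative E (z + of_int b / 2) * (- (pi * \<i> * of_int m))) (at z)"
      unfolding E_def by (auto intro!: derivative_eq_intros simp: algebra_simps)
    show "((\<lambda>z. Thj 0 (of_int (al + m) / 2) tau (z + of_int b / 2)) has_field_derivative Thj 1 (of_int (al + m) / 2) tau (z + of_int b / 2)) (at z)"
      using Thj_sderiv[OF t, of 0] by simp
  qed
  have eq: "(\<lambda>z. Thj 0 (of_int al / 2) tau (z + (of_int b / 2 + of_int m * tau / 2))) =
      (\<lambda>z. E (z + of_int b / 2) * Thj 0 (of_int (al + m) / 2) tau (z + of_int b / 2))"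
  proof
    fix z
    have h: "z + (of_int b / 2 + of_int m * tau / 2) = (z + of_int b / 2) + of_int m * tau / 2" by simp
    show "Thj 0 (of_int al / 2) tau (z + (of_int b / 2 + of_int m * tau / 2)) = E (z + of_int b / 2) * Thj 0 (of_int (al + m) / 2) tau (z + of_int b / 2)"
      unfolding E_def by (simp only: h SH)
  qed
  have "Thj 1 (of_int al / 2) tau (z + (of_int b / 2 + of_int m * tau / 2)) =
      E (z + of_int b / 2) * (- (pi * \<i> * of_int m)) * Thj 0 (of_int (al + m) / 2) tau (z + of_int b / 2)
      + Thj 1 (of_int (al + m) / 2) tau (z + of_int b / 2) * E (z + of_int b / 2)"
    by (rule DERIV_unique[OF L]) (use R eq in simp)
  then show ?thesis unfolding E_def by (simp add: algebra_simps)
qed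



lemma ipowi: "\<i> powi k = exp (of_int k * (\<i> * of_real (pi / 2)))"
  using exp_power_int[of "\<i> * of_real (pi / 2)" k] eq1 by simp

theorem theorem6p1:
  fixes \<alpha> \<beta> m n :: int and z \<tau> :: complex
  assumes "Im \<tau> > 0" and "theta1 z \<tau> \<noteq> 0"
  shows "theta_char' \<alpha> \<beta> (z + of_int n / 2 + of_int m / 2 * \<tau>) \<tau> =
    \<i> powi (- (m * (\<beta> + n))) * exp (- (1/4) * pi * \<i> * of_int m * (4 * z + of_int m * \<tau>))
      / theta1 z \<tau> *
    ((theta1' z \<tau> - pi * \<i> * of_int m * theta1 z \<tau>) * theta_char (\<alpha> + m) (\<beta> + n) z \<tau>
     - (-1) ^ nat (((\<alpha> + m) * \<lfloor>of_int (\<beta> + n) / (2::real)\<rfloor>) mod 2) * pi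
       * (theta_null (\<alpha> + m) (\<beta> + n) \<tau>)\<^sup>2
       * theta_char (\<alpha> + m - 1) 0 z \<tau> * theta_char 0 (\<beta> + n - 1) z \<tau>)"
proof -
  have t: "Im \<tau> > 0" by (rule assms(1))
  define a where "a = \<alpha> + m"
  define b where "b = \<beta> + n"
  define Th where "Th = Thj 0 (of_int a / 2) \<tau> (z + of_int b / 2)"
  define Th' where "Th' = Thj 1 (of_int a / 2) \<tau> (z + of_int b / 2)"
  define E where "E = exp (- (pi * \<i> * of_int m^2 * \<tau> / 4) - pi * \<i> * of_int m * (z + of_int b / 2))"
  have T1nz: "T1 0 \<tau> z \<noteq> 0" using assms(2) by (simp add: TH1)
  have h: "z + of_int n / 2 + of_int m / 2 * \<tau> + of_int \<beta> / 2 = z + of_int b / 2 + of_int m * \<tau> / 2"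
    unfolding b_def by (simp add: field_simps)
  have LHS: "theta_char' \<alpha> \<beta> (z + of_int n / 2 + of_int m / 2 * \<tau>) \<tau> = E * (Th' - pi * \<i> * of_int m * Th)"
    unfolding TC'[OF t] h SHD[OF t] E_def Th_def Th'_def a_def ..
  have K: "Th' * T1 0 \<tau> z - T1 1 \<tau> z * Th =
    - ((-1) ^ nat ((a * \<lfloor>of_int b / (2::real)\<rfloor>) mod 2) * pi * (Thj 0 (of_int a / 2) \<tau> (of_int b / 2))^2
      * Thj 0 (of_int (a - 1) / 2) \<tau> z * Thj 0 0 \<tau> (z + of_int (b - 1) / 2))"
    unfolding Th_def Th'_def by (rule KEY[OF t])
  have P: "\<i> powi (- (m * (\<beta> + n))) * exp (- (1/4) * pi * \<i> * of_int m * (4 * z + of_int m * \<tau>)) = E"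
    unfolding ipowi E_def exp_add[symmetric] b_def
    by (rule arg_cong[where f=exp]) (simp add: field_simps power2_eq_square)
  have R: "(theta1' z \<tau> - pi * \<i> * of_int m * theta1 z \<tau>) * theta_char (\<alpha> + m) (\<beta> + n) z \<tau>
     - (-1) ^ nat (((\<alpha> + m) * \<lfloor>of_int (\<beta> + n) / (2::real)\<rfloor>) mod 2) * pi
       * (theta_null (\<alpha> + m) (\<beta> + n) \<tau>)\<^sup>2
       * theta_char (\<alpha> + m - 1) 0 z \<tau> * theta_char 0 (\<beta> + n - 1) z \<tau>
     = T1 0 \<tau> z * (Th' - pi * \<i> * of_int m * Th)"
  proof -
    have "theta_char (\<alpha> + m) (\<beta> + n) z \<tau> = Th" unfolding Th_def TC a_def b_def ..
    moreover have "theta_null (\<alpha> + m) (\<beta> + n) \<tau> = Thj 0 (of_int a / 2) \<tau> (of_int b / 2)" unfolding TN a_def b_def ..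
    moreover have "theta_char (\<alpha> + m - 1) 0 z \<tau> = Thj 0 (of_int (a - 1) / 2) \<tau> z" unfolding TC a_def by simp
    moreover have "theta_char 0 (\<beta> + n - 1) z \<tau> = Thj 0 0 \<tau> (z + of_int (b - 1) / 2)" unfolding TC b_def by simp
    ultimately show ?thesis
      unfolding TH1 TH1'[OF t] a_def[symmetric] b_def[symmetric]
      using K by (simp add: algebra_simps)
  qed
  show ?thesis unfolding LHS P R unfolding TH1 using T1nz by simp
qed


end
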